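(* Let $n\in\mathbb{N}$ be fixed and $p\ge1$. For every $v\in\mathbb{V}_n$, $$\|v-R_hv\|_{L^p(\mathcal{D})}\to0\quad\text{as }h\to0.$$
   Context: Let $d=2$, $\mathcal{D}=(-L,L)^2$, $L>0$. For $m\in\mathbb{N}$ let $J=2^m$, $h=2L/J$, $\mathbf{x}_i=-L+ih$ ($i=0,\dots,J$), with cells $\mathcal{D}_{(i_1,i_2)}=(\mathbf{x}_{i_1-1},\mathbf{x}_{i_1}]\times(\mathbf{x}_{i_2-1},\mathbf{x}_{i_2}]$, $i_1,i_2\in\{1,\dots,J\}$. One-dimensional functions on $[-L,L]$ ($\chi_I$ = indicator of $I$): $\phi_1=\frac32\chi_{[\mathbf{x}_0,\mathbf{x}_1]}-\frac12\chi_{(\mathbf{x}_1,\mathbf{x}_2]}$; $\phi_i=-\frac12\chi_{(\mathbf{x}_{i-2},\mathbf{x}_{i-1}]}+\chi_{(\mathbf{x}_{i-1},\mathbf{x}_i]}-\frac12\chi_{(\mathbf{x}_i,\mathbf{x}_{i+1}]}$ for $i=2,\dots,J-1$; $\phi_J=-\frac12\chi_{(\mathbf{x}_{J-2},\mathbf{x}_{J-1}]}+\frac32\chi_{(\mathbf{x}_{J-1},\mathbf{x}_J]}$; and $\psi_i$ is the solution of $-\psi_i''=\phi_i$ on $(-L,L)$, $\psi_i(\pm L)=0$. Two-dimensional basis: $\boldsymbol\phi_{(i_1,i_2)}(x)=\frac{3}{2h^2}\big(\phi_{i_1}(x_1)\psi_{i_2}(x_2)+\psi_{i_1}(x_1)\phi_{i_2}(x_2)\big)$,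 and $\mathbb{V}_h=\mathrm{span}\{\boldsymbol\phi_{\underline i}:\underline i\in\{1,\dots,J\}^2\}$. With $(-\Delta)^{-1}$ the inverse homogeneous Dirichlet Laplacian on $\mathcal{D}$, define $R_hv=\sum_{\underline i}v_{\underline i}\boldsymbol\phi_{\underline i}$ with $v_{\underline i}=\frac{8}{3h^2}\frac{1}{|\mathcal{D}_{\underline i}|}\int_{\mathcal{D}_{\underline i}}(-\Delta)^{-1}v(y)\,dy$. Let $e_k(x_1,x_2)=\sin\!\big(2\pi k\frac{x_1+L}{2L}\big)\sin\!\big(2\pi k\frac{x_2+L}{2L}\big)$, $k\in\mathbb{N}$, and $\mathbb{V}_n=\mathrm{span}\{e_k:k=0,\dots,n\}$. *)

theory Defs
  imports "HOL-Analysis.Analysis"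
begin

definition meshh :: "real \<Rightarrow> nat \<Rightarrow> real" where
  "meshh L J = 2 * L / real J"

definition node :: "real \<Rightarrow> nat \<Rightarrow> nat \<Rightarrow> real" where
  "node L J i = - L + real i * meshh L J"

definition ind :: "real set \<Rightarrow> real \<Rightarrow> real" where
  "ind I t = (if t \<in> I then 1 else 0)"

definition phi1 :: "real \<Rightarrow> nat \<Rightarrow> nat \<Rightarrow> real \<Rightarrow> real" where
  "phi1 L J i t =
    (if i = 1 then
       3/2 * ind {node L J 0 .. node L J 1} t - 1/2 * ind {node L J 1 <.. node L J 2} t
     else if i = J then
       - 1/2 * ind {node L J (J-2) <.. node L J (J-1)} t + 3/2 * ind {node L J (J-1) <.. node L J J} t
     else
       - 1/2 * ind {node L J (i-2) <.. node L J (i-1)} t + ind {node L J (i-1) <.. node L J i} t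
       - 1/2 * ind {node L J i <.. node L J (i+1)} t)"

text \<open>psi_i: the solution of -psi'' = phi_i on (-L,L), psi(-L) = psi(L) = 0, i.e. the
  C^1 function on [-L,L] with absolutely continuous derivative psi' = c - (integral of phi_i)
  vanishing at the end points (set to 0 outside [-L,L]).\<close>
definition psi1 :: "real \<Rightarrow> nat \<Rightarrow> nat \<Rightarrow> real \<Rightarrow> real" where
  "psi1 L J i = (THE \<psi>. \<psi> (-L) = 0 \<and> \<psi> L = 0 \<and> (\<forall>t. t \<notin> {-L..L} \<longrightarrow> \<psi> t = 0) \<and>
      (\<exists>c. \<forall>t\<in>{-L..L}. (\<psi> has_real_derivative (c - integral {-L..t} (phi1 L J i))) (at t within {-L..L})))"

definition bphi :: "real \<Rightarrow> nat \<Rightarrow> nat \<Rightarrow> nat \<Rightarrow> real \<times> real \<Rightarrow> real" where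
  "bphi L J i1 i2 x = 3 / (2 * (meshh L J)\<^sup>2) *
     (phi1 L J i1 (fst x) * psi1 L J i2 (snd x) + psi1 L J i1 (fst x) * phi1 L J i2 (snd x))"

definition dom2 :: "real \<Rightarrow> (real \<times> real) set" where
  "dom2 L = {-L<..<L} \<times> {-L<..<L}"

definition cell :: "real \<Rightarrow> nat \<Rightarrow> nat \<Rightarrow> nat \<Rightarrow> (real \<times> real) set" where
  "cell L J i1 i2 = {node L J (i1-1) <.. node L J i1} \<times> {node L J (i2-1) <.. node L J i2}"

definition dirichlet_sol :: "real \<Rightarrow> (real \<times> real \<Rightarrow> real) \<Rightarrow> (real \<times> real \<Rightarrow> real) \<Rightarrow> bool" where
  "dirichlet_sol L v u \<longleftrightarrow>
     continuous_on ({-L..L} \<times> {-L..L}) u \<and>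
     (\<forall>x. x \<notin> dom2 L \<longrightarrow> u x = 0) \<and>
     (\<exists>D1 D2 D11 D22. \<forall>x\<in>dom2 L.
        ((\<lambda>t. u (t, snd x)) has_real_derivative D1 x) (at (fst x)) \<and>
        ((\<lambda>s. u (fst x, s)) has_real_derivative D2 x) (at (snd x)) \<and>
        ((\<lambda>t. D1 (t, snd x)) has_real_derivative D11 x) (at (fst x)) \<and>
        ((\<lambda>s. D2 (fst x, s)) has_real_derivative D22 x) (at (snd x)) \<and>
        - (D11 x + D22 x) = v x)"

definition invLap :: "real \<Rightarrow> (real \<times> real \<Rightarrow> real) \<Rightarrow> real \<times> real \<Rightarrow> real" where
  "invLap L v = (THE u. dirichlet_sol L v u)"

definition Rh :: "real \<Rightarrow> nat \<Rightarrow> (real \<times> real \<Rightarrow> real) \<Rightarrow> real \<times> real \<Rightarrow> real" where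
  "Rh L J v x = (\<Sum>i1\<in>{1..J}. \<Sum>i2\<in>{1..J}.
      (8 / (3 * (meshh L J)\<^sup>2) * (1 / measure lborel (cell L J i1 i2)) *
         (LINT y:cell L J i1 i2|lborel. invLap L v y)) * bphi L J i1 i2 x)"

definition ek :: "real \<Rightarrow> nat \<Rightarrow> real \<times> real \<Rightarrow> real" where
  "ek L k x = sin (2 * pi * real k * (fst x + L) / (2 * L)) * sin (2 * pi * real k * (snd x + L) / (2 * L))"

definition Vn :: "real \<Rightarrow> nat \<Rightarrow> (real \<times> real \<Rightarrow> real) set" where
  "Vn L n = {v. \<exists>c. v = (\<lambda>x. \<Sum>k\<le>n. c k * ek L k x)}"

definition Lp_norm :: "real \<Rightarrow> real \<Rightarrow> (real \<times> real \<Rightarrow> real) \<Rightarrow> real" where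
  "Lp_norm L p f = (LINT x:dom2 L|lborel. \<bar>f x\<bar> powr p) powr (1 / p)"

end

theory Submission
  imports Defs "HOL-Real_Asymp.Real_Asymp"
begin

lemma deriv_interior:
  fixes f :: "real \<Rightarrow> real"
  assumes "(f has_real_derivative D) (at x within {a..b})" "a < x" "x < b"
  shows "(f has_real_derivative D) (at x)"
  using assms by (simp add: at_within_Icc_at)

lemma psi_unique:
  fixes L :: real
  assumes L: "L > 0"
    and a1: "\<psi>1 (-L) = 0" "\<psi>1 L = 0"
    and d1: "\<forall>t\<in>{-L..L}. (\<psi>1 has_real_derivative (c1 - \<Phi> t)) (at t within {-L..L})"
    and a2: "\<psi>2 (-L) = 0" "\<psi>2 L = 0"
    and d2: "\<forall>t\<in>{-L..L}. (\<psi>2 has_real_derivative (c2 - \<Phi> t)) (at t within {-L..L})"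
  shows "\<forall>t\<in>{-L..L}. \<psi>1 t = \<psi>2 t"
proof -
  define e where "e t = \<psi>1 t - \<psi>2 t - (c1 - c2) * (t + L)" for t
  have "\<And>t. t \<in> {-L..L} \<Longrightarrow> (e has_real_derivative 0) (at t within {-L..L})"
  proof -
    fix t assume t: "t \<in> {-L..L}"
    have "(e has_real_derivative ((c1 - \<Phi> t) - (c2 - \<Phi> t) - (c1 - c2))) (at t within {-L..L})"
      unfolding e_def using d1 d2 t
      by (auto intro!: derivative_eq_intros)
    then show "(e has_real_derivative 0) (at t within {-L..L})" by simp
  qed
  then obtain k where k: "\<forall>t\<in>{-L..L}. e t = k"
    using has_field_derivative_zero_constant[of "{-L..L}" e] by auto
  have "e (-L) = 0" using a1 a2 by (simp add: e_def)
  hence k0: "k = 0" using k L by force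
  have "e L = - (c1 - c2) * (2 * L)" using a1 a2 by (simp add: e_def algebra_simps)
  hence "c1 = c2" using k k0 L by force
  then show ?thesis using k k0 by (auto simp: e_def)
qed

lemma ode_bound:
  fixes L :: real
  assumes L: "L > 0"
    and g0: "g (-L) = 0" "g L = 0"
    and dg: "\<forall>t\<in>{-L..L}. (g has_real_derivative (c - R t)) (at t within {-L..L})"
    and bR: "\<forall>t\<in>{-L..L}. \<bar>R t\<bar> \<le> M"
  shows "\<forall>t\<in>{-L..L}. \<bar>g t\<bar> \<le> 4 * L * M"
proof -
  have cont: "continuous_on {-L..L} g"
    by (rule DERIV_continuous_on) (use dg in auto)
  have dat: "\<And>x. -L < x \<Longrightarrow> x < L \<Longrightarrow> (g has_real_derivative (c - R x)) (at x)"
    using dg deriv_interior by force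
  obtain l z where z: "-L < z" "z < L" "DERIV g z :> l" "g L - g (-L) = (L - - L) * l"
    using MVT[of "-L" L g] L cont dat by (force simp: real_differentiable_def)
  have "l = c - R z" using dat[OF z(1,2)] z(3) DERIV_unique by blast
  moreover have "l = 0" using z(4) g0 L by simp
  ultimately have c: "\<bar>c\<bar> \<le> M" using bR z by force
  have M0: "0 \<le> M" using bR L by force
  show ?thesis
  proof
    fix t assume t: "t \<in> {-L..L}"
    show "\<bar>g t\<bar> \<le> 4 * L * M"
    proof (cases "t = -L")
      case True then show ?thesis using g0 M0 L by simp
    next
      case False
      hence lt: "-L < t" using t by simp
      have cont': "continuous_on {-L..t} g" by (rule continuous_on_subset[OF cont]) (use t in auto)
      obtain l' z' where z': "-L < z'" "z' < t" "DERIV g z' :> l'" "g t - g (-L) = (t - - L) * l'"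
        using MVT[of "-L" t g] lt cont' dat t by (force simp: real_differentiable_def)
      have "l' = c - R z'" using dat[of z'] z' t DERIV_unique by force
      moreover have "\<bar>R z'\<bar> \<le> M" using bR z' t by auto
      ultimately have "\<bar>l'\<bar> \<le> 2 * M" using c by linarith
      hence "\<bar>g t\<bar> \<le> (t + L) * (2 * M)" using z'(4) g0 lt
        by (simp add: abs_mult)
      also have "\<dots> \<le> (2 * L) * (2 * M)" using t M0 by (intro mult_right_mono) auto
      finally show ?thesis by simp
    qed
  qed
qed

lemma psi_exists:
  fixes L :: real
  assumes L: "L > 0" and phi: "\<phi> integrable_on {-L..L}"
  shows "\<exists>\<psi>. \<psi> (-L) = 0 \<and> \<psi> L = 0 \<and> (\<forall>t. t \<notin> {-L..L} \<longrightarrow> \<psi> t = 0) \<and>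
      (\<exists>c. \<forall>t\<in>{-L..L}. (\<psi> has_real_derivative (c - integral {-L..t} \<phi>)) (at t within {-L..L}))"
proof -
  define \<Phi> where "\<Phi> t = integral {-L..t} \<phi>" for t
  have cPhi: "continuous_on {-L..L} \<Phi>" unfolding \<Phi>_def by (rule indefinite_integral_continuous_1[OF phi])
  define c where "c = integral {-L..L} \<Phi> / (2 * L)"
  define G where "G t = integral {-L..t} (\<lambda>s. c - \<Phi> s)" for t
  define \<psi> where "\<psi> t = (if t \<in> {-L..L} then G t else 0)" for t
  have cc: "continuous_on {-L..L} (\<lambda>s. c - \<Phi> s)" by (intro continuous_intros cPhi)
  have dG: "(G has_real_derivative (c - \<Phi> t)) (at t within {-L..L})" if "t \<in> {-L..L}" for t
    unfolding G_def by (rule integral_has_real_derivative[OF cc that])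
  have dpsi: "(\<psi> has_real_derivative (c - \<Phi> t)) (at t within {-L..L})" if "t \<in> {-L..L}" for t
    by (rule has_field_derivative_transform_within[OF dG[OF that], of 1]) (use that in \<open>auto simp: \<psi>_def\<close>)
  have iPhi: "\<Phi> integrable_on {-L..L}" by (rule integrable_continuous_interval[OF cPhi])
  have "G L = integral {-L..L} (\<lambda>s. c) - integral {-L..L} \<Phi>"
    unfolding G_def by (rule integral_diff) (auto intro: iPhi)
  also have "\<dots> = 0" using L by (simp add: c_def)
  finally have GL: "G L = 0" .
  show ?thesis
  proof (rule exI[of _ \<psi>], intro conjI)
    show "\<psi> (-L) = 0" using L by (simp add: \<psi>_def G_def)
    show "\<psi> L = 0" using L GL by (simp add: \<psi>_def)
    show "\<forall>t. t \<notin> {-L..L} \<longrightarrow> \<psi> t = 0" by (simp add: \<psi>_def)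
    show "\<exists>c. \<forall>t\<in>{-L..L}. (\<psi> has_real_derivative (c - integral {-L..t} \<phi>)) (at t within {-L..L})"
      using dpsi unfolding \<Phi>_def by blast
  qed
qed

definition psiP :: "real \<Rightarrow> (real \<Rightarrow> real) \<Rightarrow> (real \<Rightarrow> real) \<Rightarrow> bool" where
  "psiP L \<phi> \<psi> \<longleftrightarrow> \<psi> (-L) = 0 \<and> \<psi> L = 0 \<and> (\<forall>t. t \<notin> {-L..L} \<longrightarrow> \<psi> t = 0) \<and>
      (\<exists>c. \<forall>t\<in>{-L..L}. (\<psi> has_real_derivative (c - integral {-L..t} \<phi>)) (at t within {-L..L}))"

lemma psiP_ex1:
  fixes L :: real
  assumes L: "L > 0" and phi: "\<phi> integrable_on {-L..L}"
  shows "\<exists>!\<psi>. psiP L \<phi> \<psi>"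
proof -
  obtain \<psi> where p: "psiP L \<phi> \<psi>" using psi_exists[OF L phi] unfolding psiP_def by blast
  moreover have "\<psi>' = \<psi>" if pp: "psiP L \<phi> \<psi>'" for \<psi>'
  proof
    fix t
    show "\<psi>' t = \<psi> t"
    proof (cases "t \<in> {-L..L}")
      case True
      obtain c1 where c1: "\<forall>t\<in>{-L..L}. (\<psi>' has_real_derivative (c1 - integral {-L..t} \<phi>)) (at t within {-L..L})"
        using pp unfolding psiP_def by blast
      obtain c2 where c2: "\<forall>t\<in>{-L..L}. (\<psi> has_real_derivative (c2 - integral {-L..t} \<phi>)) (at t within {-L..L})"
        using p unfolding psiP_def by blast
      show ?thesis
        using psi_unique[OF L _ _ c1 _ _ c2] pp p True unfolding psiP_def by blast
    next
      case False then show ?thesis using pp p unfolding psiP_def by auto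
    qed
  qed
  ultimately show ?thesis by blast
qed

lemma psi1_P:
  fixes L :: real
  assumes L: "L > 0" and phi: "phi1 L J i integrable_on {-L..L}"
  shows "psiP L (phi1 L J i) (psi1 L J i)"
proof -
  have "psi1 L J i = (THE \<psi>. psiP L (phi1 L J i) \<psi>)"
    unfolding psi1_def psiP_def by simp
  then show ?thesis using theI'[OF psiP_ex1[OF L phi]] by simp
qed

lemma meshh_pos: "L > 0 \<Longrightarrow> J > 0 \<Longrightarrow> meshh L J > 0"
  by (simp add: meshh_def)

lemma node_0[simp]: "node L J 0 = -L" by (simp add: node_def)

lemma node_J: "J > 0 \<Longrightarrow> node L J J = L"
  by (simp add: node_def meshh_def)

lemma cell_exists:
  assumes L: "L > 0" and J: "J > 0" and t: "-L < t" "t \<le> L"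
  shows "\<exists>j. 1 \<le> j \<and> j \<le> J \<and> node L J (j-1) < t \<and> t \<le> node L J j"
proof -
  define h where "h = meshh L J"
  have h: "h > 0" using meshh_pos[OF L J] h_def by simp
  define a where "a = (t + L) / h"
  have a0: "a > 0" using t h by (simp add: a_def)
  have hJ: "real J * h = 2 * L" using J by (simp add: h_def meshh_def)
  have aJ: "a \<le> real J" using t h hJ by (simp add: a_def field_simps)
  define j where "j = nat \<lceil>a\<rceil>"
  have "0 < \<lceil>a\<rceil>" using a0 by (simp add: zero_less_ceiling) 
  hence j1: "1 \<le> j" by (simp add: j_def le_nat_iff | (simp add: j_def, linarith) | presburger)
  have rj: "real j = of_int \<lceil>a\<rceil>" using a0 by (simp add: j_def)
  have "\<lceil>a\<rceil> \<le> int J" using aJ by (simp add: ceiling_le_iff)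
  hence jJ: "j \<le> J" by (simp add: j_def nat_le_iff | (simp add: j_def, linarith) | presburger)
  have c1: "real j - 1 < a" using rj by linarith
  have c2: "a \<le> real j" using rj by linarith
  have "node L J (j-1) = -L + (real j - 1) * h" using j1 by (simp add: node_def h_def of_nat_diff)
  also have "\<dots> < t" using c1 h by (simp add: a_def field_simps)
  finally have n1: "node L J (j-1) < t" .
  have "t \<le> -L + real j * h" using c2 h by (simp add: a_def field_simps)
  hence n2: "t \<le> node L J j" by (simp add: node_def h_def)
  show ?thesis using j1 jJ n1 n2 by blast
qed

lemma in_cell_iff:
  assumes L: "L > 0" and J: "J > 0" and j: "1 \<le> j" and t: "node L J (j-1) < t" "t \<le> node L J j"
    and i: "1 \<le> i"
  shows "(node L J (i-1) < t \<and> t \<le> node L J i) \<longleftrightarrow> i = j"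
proof
  assume "i = j" then show "node L J (i-1) < t \<and> t \<le> node L J i" using t by simp
next
  assume a: "node L J (i-1) < t \<and> t \<le> node L J i"
  define h where "h = meshh L J"
  have h: "h > 0" using meshh_pos[OF L J] h_def by simp
  have t1: "(real j - 1) * h < t + L" "t + L \<le> real j * h"
    using t j by (auto simp: node_def h_def of_nat_diff algebra_simps)
  have t2: "(real i - 1) * h < t + L" "t + L \<le> real i * h"
    using a i by (auto simp: node_def h_def of_nat_diff algebra_simps)
  have "real i - 1 < real j"
  proof (rule ccontr)
    assume "\<not> real i - 1 < real j"
    hence "real j * h \<le> (real i - 1) * h" using h by (intro mult_right_mono) auto
    thus False using t1 t2 by linarith
  qed
  moreover have "real j - 1 < real i"
  proof (rule ccontr)
    assume "\<not> real j - 1 < real i"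
    hence "real i * h \<le> (real j - 1) * h" using h by (intro mult_right_mono) auto
    thus False using t1 t2 by linarith
  qed
  ultimately show "i = j" by linarith
qed

lemma ind_cell:
  assumes L: "L > 0" and J: "J > 0" and j: "1 \<le> j" and t: "node L J (j-1) < t" "t \<le> node L J j"
    and k: "1 \<le> k"
  shows "ind {node L J (k-1)<..node L J k} t = (if k = j then 1 else 0)"
  using in_cell_iff[OF L J j t k] by (simp add: ind_def)

lemma node_mono: "L > 0 \<Longrightarrow> J > 0 \<Longrightarrow> a \<le> b \<Longrightarrow> node L J a \<le> node L J b"
  using meshh_pos[of L J] by (simp add: node_def mult_right_mono)

lemma phi1_val:
  assumes L: "L > 0" and J: "2 \<le> J" and j: "1 \<le> j" "j \<le> J" and t: "node L J (j-1) < t" "t \<le> node L J j"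
    and i: "1 \<le> i" "i \<le> J"
  shows "phi1 L J i t = (if i = j + 1 then -1/2 else 0) + (if i = j then 1 else 0) + (if i + 1 = j then -1/2 else 0)
     + (if j = 1 then (if i = 1 then 1/2 else 0) else 0) + (if j = J then (if i = J then 1/2 else 0) else 0)"
proof -
  have J0: "J > 0" using J by simp
  note ic = ind_cell[OF L J0 j(1) t]
  have tL: "-L < t" using t node_mono[OF L J0, of 0 "j-1"] by simp
  show ?thesis
  proof (cases "i = 1")
    case True
    have a: "ind {node L J 0..node L J 1} t = (if j = 1 then 1 else 0)"
      using ic[of 1] tL by (simp add: ind_def)
    have b: "ind {node L J 1<..node L J 2} t = (if j = 2 then 1 else 0)"
      using ic[of 2] by simp
    have ph: "phi1 L J i t = 3/2 * (if j = 1 then 1 else 0) - 1/2 * (if j = 2 then 1 else 0)"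
      unfolding phi1_def using True a b by simp
    have J1: "J \<noteq> 1" using J by simp
    show ?thesis unfolding ph using True j J1
      by (cases "j = 1") simp_all
  next
    case False
    show ?thesis
    proof (cases "i = J")
      case True
      have a: "ind {node L J (J-2)<..node L J (J-1)} t = (if J = j + 1 then 1 else 0)"
        using ic[of "J-1"] J by (auto simp: diff_diff_left numeral_2_eq_2)
      have b: "ind {node L J (J-1)<..node L J J} t = (if J = j then 1 else 0)"
        using ic[of J] J by auto
      have ph: "phi1 L J i t = -1/2 * (if J = j + 1 then 1 else 0) + 3/2 * (if J = j then 1 else 0)"
        unfolding phi1_def using True False a b by simp
      have nj: "\<not> J + 1 = j" using j by simp
      show ?thesis unfolding ph using True False j nj
        by (cases "j = J") simp_all
    next
      case False2: False
      have a: "ind {node L J (i-2)<..node L J (i-1)} t = (if i = j + 1 then 1 else 0)"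
        using ic[of "i-1"] False i by (auto simp: diff_diff_left numeral_2_eq_2)
      have b: "ind {node L J (i-1)<..node L J i} t = (if i = j then 1 else 0)"
        using ic[of i] i by auto
      have c: "ind {node L J i<..node L J (i+1)} t = (if i + 1 = j then 1 else 0)"
        using ic[of "i+1"] by auto
      have ph: "phi1 L J i t = -1/2 * (if i = j + 1 then 1 else 0) + (if i = j then 1 else 0) - 1/2 * (if i + 1 = j then 1 else 0)"
        unfolding phi1_def using False False2 a b c by simp
      show ?thesis unfolding ph using False False2 by simp
    qed
  qed
qed

lemma P_sum:
  assumes L: "L > 0" and J: "2 \<le> J" and j: "1 \<le> j" "j \<le> J" and t: "node L J (j-1) < t" "t \<le> node L J j"
    and a0: "a 0 = - a 1" and aJ: "a (Suc J) = - a J"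
  shows "(\<Sum>i\<in>{1..J}. a i * phi1 L J i t) = a j - (a (j-1) + a (j+1)) / 2"
proof -
  have "(\<Sum>i\<in>{1..J}. a i * phi1 L J i t) =
     (\<Sum>i\<in>{1..J}. (if i = j + 1 then - a i / 2 else 0) + (if i = j then a i else 0) + (if i + 1 = j then - a i/2 else 0)
     + (if j = 1 then (if i = 1 then a i/2 else 0) else 0) + (if j = J then (if i = J then a i /2 else 0) else 0))"
    by (rule sum.cong[OF refl]) (simp add: phi1_val[OF L J j t])
  also have "\<dots> = (\<Sum>i\<in>{1..J}. (if i = j + 1 then - a i / 2 else 0)) + (\<Sum>i\<in>{1..J}. (if i = j then a i else 0))
     + (\<Sum>i\<in>{1..J}. (if i + 1 = j then - a i/2 else 0))
     + (if j = 1 then (\<Sum>i\<in>{1..J}. (if i = 1 then a i/2 else 0)) else 0)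
     + (if j = J then (\<Sum>i\<in>{1..J}. (if i = J then a i /2 else 0)) else 0)"
    by (simp add: sum.distrib)
  also have "\<dots> = (if j + 1 \<le> J then - a (j+1) / 2 else 0) + a j + (if 2 \<le> j then - a (j-1) / 2 else 0)
     + (if j = 1 then a 1 / 2 else 0) + (if j = J then a J / 2 else 0)"
  proof -
    have s1: "(\<Sum>i\<in>{1..J}. (if i = j + 1 then - a i / 2 else 0)) = (if j + 1 \<le> J then - a (j+1) / 2 else 0)"
      by (simp add: sum.delta')
    have s2: "(\<Sum>i\<in>{1..J}. (if i = j then a i else 0)) = a j"
      using j by (simp add: sum.delta')
    have s3: "(\<Sum>i\<in>{1..J}. (if i + 1 = j then - a i/2 else 0)) = (if 2 \<le> j then - a (j-1) / 2 else 0)"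
    proof (cases "2 \<le> j")
      case True
      have "(\<Sum>i\<in>{1..J}. (if i + 1 = j then - a i/2 else 0)) = (\<Sum>i\<in>{1..J}. (if i = j - 1 then - a i/2 else 0))"
        by (rule sum.cong[OF refl]) (use True in auto)
      also have "\<dots> = - a (j-1) / 2" using True j by (subst sum.delta) auto
      finally show ?thesis using True by simp
    next
      case False
      have "(\<Sum>i\<in>{1..J}. (if i + 1 = j then - a i/2 else 0)) = (\<Sum>i\<in>{1..J}. 0)"
        by (rule sum.cong[OF refl]) (use False in auto)
      then show ?thesis using False by simp
    qed
    have s4: "(\<Sum>i\<in>{1..J}. (if i = 1 then a i/2 else 0)) = a 1 / 2"
      using J by (simp add: sum.delta')
    have s5: "(\<Sum>i\<in>{1..J}. (if i = J then a i/2 else 0)) = a J / 2"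
      using J by (simp add: sum.delta')
    show ?thesis unfolding s1 s2 s3 s4 s5 by simp
  qed
  also have "\<dots> = a j - (a (j-1) + a (j+1)) / 2"
  proof (cases "j = 1")
    case True then show ?thesis using J a0 by (simp add: field_simps)
  next
    case False
    have j2: "2 \<le> j" using False j by simp
    show ?thesis
    proof (cases "j = J")
      case True then show ?thesis using J aJ j2 by (simp add: field_simps)
    next
      case False2: False
      then have "j + 1 \<le> J" using j by simp
      then show ?thesis using j2 False False2 by (simp add: field_simps)
    qed
  qed
  finally show ?thesis .
qed

definition sf :: "real \<Rightarrow> nat \<Rightarrow> real \<Rightarrow> real" where
  "sf L k t = sin (2 * pi * real k * (t + L) / (2 * L))"

definition om :: "real \<Rightarrow> nat \<Rightarrow> real" where
  "om L k = pi * real k / L"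

lemma sf_alt: "L > 0 \<Longrightarrow> sf L k t = sin (om L k * (t + L))"
proof -
  assume L: "L > 0"
  have "2 * pi * real k * (t + L) / (2 * L) = om L k * (t + L)" using L by (simp add: om_def field_simps)
  then show ?thesis by (simp add: sf_def)
qed

lemma ek_sf: "ek L k x = sf L k (fst x) * sf L k (snd x)"
  by (simp add: ek_def sf_def)

lemma om_pos: "L > 0 \<Longrightarrow> k > 0 \<Longrightarrow> om L k > 0"
  by (simp add: om_def)

lemma sf_zero: "sf L 0 t = 0" by (simp add: sf_def)

lemma sf_int:
  assumes L: "L > 0" and ab: "a \<le> b"
  shows "(LBINT y:{a<..b}. sf L k y) = (cos (om L k * (a + L)) - cos (om L k * (b + L))) / om L k"
proof (cases "k = 0")
  case True then show ?thesis by (simp add: sf_def om_def)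
next
  case False
  hence w: "om L k > 0" using om_pos L by simp
  have "(LBINT y:{a<..b}. sf L k y) = (LBINT y=a..b. sf L k y)"
    using ab by (simp add: interval_integral_Ioc)
  also have "\<dots> = (- cos (om L k * (b + L)) / om L k) - (- cos (om L k * (a + L)) / om L k)"
  proof (rule interval_integral_FTC_finite)
    show "continuous_on {min a b..max a b} (sf L k)"
      unfolding sf_def using L by (intro continuous_intros) auto
    fix x
    have "((\<lambda>y. - cos (om L k * (y + L)) / om L k) has_real_derivative
       (sin (om L k * (x + L)) * (om L k * (1 + 0)) / om L k)) (at x)"
      by (auto intro!: derivative_eq_intros)
    also have "sin (om L k * (x + L)) * (om L k * (1 + 0)) / om L k = sf L k x"
      using w L by (simp add: sf_alt)
    finally show "((\<lambda>y. - cos (om L k * (y + L)) / om L k) has_vector_derivative sf L k x)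
        (at x within {min a b..max a b})"
      by (simp add: has_real_derivative_iff_has_vector_derivative[symmetric] has_field_derivative_at_within)
  qed
  also have "\<dots> = (cos (om L k * (a + L)) - cos (om L k * (b + L))) / om L k"
    using w by (simp add: field_simps)
  finally show ?thesis .
qed

definition cavg :: "real \<Rightarrow> nat \<Rightarrow> nat \<Rightarrow> real \<Rightarrow> real" where
  "cavg L J k x = 2 * sin (om L k * meshh L J / 2) / (om L k * meshh L J) * sin (om L k * meshh L J * (x - 1/2))"

lemma cell_int1:
  assumes L: "L > 0" and J: "J > 0" and i: "1 \<le> i"
  shows "(LBINT y:{node L J (i-1)<..node L J i}. sf L k y) = meshh L J * cavg L J k (real i)"
proof -
  define h where "h = meshh L J"
  define w where "w = om L k"
  have h: "h > 0" using L J by (simp add: h_def meshh_def)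
  have n1: "node L J (i-1) + L = h * (real i - 1)" using i by (simp add: node_def h_def of_nat_diff algebra_simps)
  have n2: "node L J i + L = h * real i" by (simp add: node_def h_def algebra_simps)
  have le: "node L J (i-1) \<le> node L J i" using h by (simp add: node_def h_def[symmetric])
  have "(LBINT y:{node L J (i-1)<..node L J i}. sf L k y) = (cos (w * (h * (real i - 1))) - cos (w * (h * real i))) / w"
    using sf_int[OF L le, of k] n1 n2 by (simp add: w_def)
  also have "cos (w * (h * (real i - 1))) - cos (w * (h * real i)) = 2 * sin (w * h * (real i - 1/2)) * sin (w * h / 2)"
    by (simp add: cos_diff_cos algebra_simps add_divide_distrib diff_divide_distrib)
  finally have eq: "(LBINT y:{node L J (i-1)<..node L J i}. sf L k y) = 2 * sin (w * h * (real i - 1/2)) * sin (w * h / 2) / w" .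
  show ?thesis
  proof (cases "w = 0")
    case True then show ?thesis using eq by (simp add: cavg_def w_def h_def)
  next
    case False then show ?thesis using eq h by (simp add: cavg_def w_def[symmetric] h_def[symmetric] field_simps)
  qed
qed

lemma omhJ: "L > 0 \<Longrightarrow> J > 0 \<Longrightarrow> om L k * meshh L J * real J = 2 * real k * pi"
  by (simp add: om_def meshh_def field_simps)

lemma cavg_0: "cavg L J k 0 = - cavg L J k 1"
proof -
  have "sin (om L k * meshh L J * (0 - 1/2)) = - sin (om L k * meshh L J / 2)" by simp
  moreover have "sin (om L k * meshh L J * (1 - 1/2)) = sin (om L k * meshh L J / 2)" by simp
  ultimately show ?thesis by (simp add: cavg_def)
qed

lemma cavg_J:
  assumes L: "L > 0" and J: "J > 0"
  shows "cavg L J k (real (Suc J)) = - cavg L J k (real J)"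
proof -
  define b where "b = om L k * meshh L J / 2"
  have e: "om L k * meshh L J * real J = 2 * real k * pi" using omhJ[OF L J] .
  have "om L k * meshh L J * (real (Suc J) - 1/2) = b + 2 * real k * pi"
    using e by (simp add: b_def algebra_simps)
  hence s1: "sin (om L k * meshh L J * (real (Suc J) - 1/2)) = sin b"
    by (simp add: sin_add)
  have "om L k * meshh L J * (real J - 1/2) = 2 * real k * pi - b"
    using e by (simp add: b_def algebra_simps)
  hence s2: "sin (om L k * meshh L J * (real J - 1/2)) = - sin b"
    by (simp add: sin_diff)
  show ?thesis unfolding cavg_def s1 s2 by simp
qed

lemma cavg_second_diff:
  assumes j: "1 \<le> j"
  shows "cavg L J k (real j) - (cavg L J k (real (j-1)) + cavg L J k (real (j+1))) / 2
     = 4 * sin (om L k * meshh L J / 2) ^ 3 / (om L k * meshh L J) * sin (om L k * meshh L J * (real j - 1/2))"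
proof -
  define w where "w = om L k * meshh L J"
  define th where "th = w * (real j - 1/2)"
  define K where "K = 2 * sin (w / 2) / w"
  have c: "cavg L J k x = K * sin (w * (x - 1/2))" for x by (simp add: cavg_def K_def w_def)
  have a1: "w * (real (j-1) - 1/2) = th - w" using j by (simp add: th_def of_nat_diff algebra_simps)
  have a2: "w * (real (j+1) - 1/2) = th + w" by (simp add: th_def algebra_simps)
  have a0: "w * (real j - 1/2) = th" by (simp add: th_def)
  have ss: "sin (th - w) + sin (th + w) = 2 * sin th * cos w"
    by (simp add: sin_diff sin_add)
  have cw: "cos w = 1 - 2 * sin (w/2) ^ 2"
    using cos_double_sin[of "w/2"] by simp
  have "cavg L J k (real j) - (cavg L J k (real (j-1)) + cavg L J k (real (j+1))) / 2
      = K * (sin th - (sin (th - w) + sin (th + w)) / 2)"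
    unfolding c a0 a1 a2 by (simp add: algebra_simps)
  also have "\<dots> = K * sin th * (1 - cos w)" unfolding ss by (simp add: algebra_simps)
  also have "\<dots> = K * sin th * (2 * sin (w/2) ^ 2)" unfolding cw by simp
  also have "\<dots> = 4 * sin (w / 2) ^ 3 / w * sin th"
    by (simp add: K_def power3_eq_cube power2_eq_square)
  finally show ?thesis by (simp add: w_def th_def)
qed

lemma abs_sin_diff_le: "\<bar>sin x - sin y\<bar> \<le> \<bar>x - y\<bar>" for x y :: real
proof -
  have "\<bar>sin x - sin y\<bar> = 2 * \<bar>sin ((x - y) / 2)\<bar> * \<bar>cos ((x + y) / 2)\<bar>"
    by (simp add: sin_diff_sin abs_mult)
  also have "\<dots> \<le> 2 * \<bar>(x - y) / 2\<bar> * 1"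
    by (intro mult_mono abs_sin_x_le_abs_x) auto
  finally show ?thesis by simp
qed

definition Pk :: "real \<Rightarrow> nat \<Rightarrow> nat \<Rightarrow> real \<Rightarrow> real" where
  "Pk L J k t = (\<Sum>i\<in>{1..J}. cavg L J k (real i) * phi1 L J i t)"

definition Qc :: "real \<Rightarrow> nat \<Rightarrow> nat \<Rightarrow> real" where
  "Qc L J k = 8 * sin (om L k * meshh L J / 2) ^ 3 / (om L k * meshh L J ^ 3)"

lemma Pk_cell:
  assumes L: "L > 0" and J: "2 \<le> J" and j: "1 \<le> j" "j \<le> J" and t: "node L J (j-1) < t" "t \<le> node L J j"
  shows "Pk L J k t = 4 * sin (om L k * meshh L J / 2) ^ 3 / (om L k * meshh L J) * sin (om L k * meshh L J * (real j - 1/2))"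
proof -
  have J0: "J > 0" using J by simp
  have "Pk L J k t = cavg L J k (real j) - (cavg L J k (real (j-1)) + cavg L J k (real (j+1))) / 2"
    unfolding Pk_def
    by (rule P_sum[OF L J j t, of "\<lambda>i. cavg L J k (real i)"]) (use cavg_0 cavg_J[OF L J0] in auto)
  then show ?thesis using cavg_second_diff[OF j(1)] by simp
qed

lemma Pk_bound:
  assumes L: "L > 0" and J: "2 \<le> J" and k: "k > 0" and t: "-L < t" "t \<le> L"
  shows "\<bar>2 / meshh L J ^ 2 * Pk L J k t - om L k ^ 2 * sf L k t\<bar>
           \<le> \<bar>Qc L J k - om L k ^ 2\<bar> + om L k ^ 3 * meshh L J / 2"
proof -
  have J0: "J > 0" using J by simp
  obtain j where j: "1 \<le> j" "j \<le> J" and tj: "node L J (j-1) < t" "t \<le> node L J j"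
    using cell_exists[OF L J0 t] by blast
  define h where "h = meshh L J"
  define w where "w = om L k"
  have h: "h > 0" using L J0 by (simp add: h_def meshh_def)
  have w: "w > 0" using L k by (simp add: w_def om_pos)
  define th where "th = w * h * (real j - 1/2)"
  define y where "y = w * (t + L)"
  have P: "2 / h ^ 2 * Pk L J k t = Qc L J k * sin th"
    unfolding Pk_cell[OF L J j tj] Qc_def th_def h_def w_def
    using h w by (simp add: h_def[symmetric] w_def[symmetric] field_simps power3_eq_cube power2_eq_square)
  have sf: "sf L k t = sin y" using L by (simp add: sf_alt y_def w_def)
  have t1: "(real j - 1) * h < t + L" "t + L \<le> real j * h"
    using tj j by (auto simp: node_def h_def of_nat_diff algebra_simps)
  have "\<bar>h * (real j - 1/2) - (t + L)\<bar> \<le> h / 2" using t1 by (auto simp: algebra_simps abs_if)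
  hence "w * \<bar>h * (real j - 1/2) - (t + L)\<bar> \<le> w * (h / 2)" using w by (intro mult_left_mono) auto
  moreover have "th - y = w * (h * (real j - 1/2) - (t + L))" by (simp add: th_def y_def algebra_simps)
  ultimately have thy: "\<bar>th - y\<bar> \<le> w * h / 2" using w by (simp add: abs_mult)
  have "\<bar>Qc L J k * sin th - w ^ 2 * sin y\<bar> = \<bar>(Qc L J k - w ^ 2) * sin th + w ^ 2 * (sin th - sin y)\<bar>"
    by (simp add: algebra_simps)
  also have "\<dots> \<le> \<bar>Qc L J k - w ^ 2\<bar> * \<bar>sin th\<bar> + w ^ 2 * \<bar>sin th - sin y\<bar>"
    by (rule order_trans[OF abs_triangle_ineq]) (simp add: abs_mult)
  also have "\<dots> \<le> \<bar>Qc L J k - w ^ 2\<bar> * 1 + w ^ 2 * (w * h / 2)"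
    by (intro add_mono mult_left_mono order_trans[OF abs_sin_diff_le thy]) (auto simp: abs_sin_le_one)
  finally show ?thesis unfolding P[unfolded h_def] sf by (simp add: w_def h_def power3_eq_cube power2_eq_square algebra_simps)
qed

lemma int_cmult: "f integrable_on S \<Longrightarrow> (\<lambda>x. c * f x) integrable_on S" for f :: "real \<Rightarrow> real"
  using integrable_cmul[of f S c] by simp

lemma integral_cmult: "integral S (\<lambda>x. c * f x) = c * integral S f" for f :: "real \<Rightarrow> real"
  using integral_cmul[of S c f] by simp

lemma ind_eq: "ind I = indicator I"
  by (auto simp: ind_def indicator_def fun_eq_iff)

lemma phi1_meas: "phi1 L J i \<in> borel_measurable borel"
  unfolding phi1_def[abs_def] ind_eq by measurable

lemma phi1_meas_lborel: "phi1 L J i \<in> borel_measurable lborel"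
  using phi1_meas by simp

lemma phi1_bound: "\<bar>phi1 L J i t\<bar> \<le> 2"
  by (auto simp: phi1_def ind_def)

lemma bounded_meas_integrable_on:
  fixes f :: "real \<Rightarrow> real"
  assumes f: "f \<in> borel_measurable lborel" and B: "\<And>x. \<bar>f x\<bar> \<le> B"
  shows "f integrable_on {a..b}"
proof -
  have "set_integrable lborel {a..b} f"
    unfolding set_integrable_def
    by (rule integrableI_bounded_set_indicator[where B=B]) (use f B in \<open>auto simp: emeasure_lborel_Icc_eq\<close>)
  then show ?thesis by (rule set_borel_integral_eq_integral(1))
qed

lemma phi1_integrable: "phi1 L J i integrable_on {a..b}"
  by (rule bounded_meas_integrable_on[OF phi1_meas_lborel phi1_bound])

lemma Pk_integrable: "Pk L J k integrable_on {a..b}"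
  unfolding Pk_def[abs_def]
  by (intro Henstock_Kurzweil_Integration.integrable_sum int_cmult phi1_integrable) auto

lemma psi1_P': assumes "L > 0" shows "psiP L (phi1 L J i) (psi1 L J i)"
  using psi1_P[OF assms phi1_integrable] .

definition Sk :: "real \<Rightarrow> nat \<Rightarrow> nat \<Rightarrow> real \<Rightarrow> real" where
  "Sk L J k t = (\<Sum>i\<in>{1..J}. cavg L J k (real i) * psi1 L J i t)"

lemma Sk_props:
  assumes L: "L > 0"
  shows "Sk L J k (-L) = 0" "Sk L J k L = 0"
    "\<exists>C. \<forall>t\<in>{-L..L}. (Sk L J k has_real_derivative (C - integral {-L..t} (Pk L J k))) (at t within {-L..L})"
proof -
  have P: "\<And>i. psiP L (phi1 L J i) (psi1 L J i)" using psi1_P'[OF L] .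
  show "Sk L J k (-L) = 0" "Sk L J k L = 0" using P by (simp_all add: Sk_def psiP_def)
  have "\<forall>i. \<exists>c. \<forall>t\<in>{-L..L}. (psi1 L J i has_real_derivative (c - integral {-L..t} (phi1 L J i))) (at t within {-L..L})"
    using P unfolding psiP_def by blast
  then obtain c where c: "\<And>i t. t \<in> {-L..L} \<Longrightarrow> (psi1 L J i has_real_derivative (c i - integral {-L..t} (phi1 L J i))) (at t within {-L..L})"
    by metis
  define C where "C = (\<Sum>i\<in>{1..J}. cavg L J k (real i) * c i)"
  have "(Sk L J k has_real_derivative (C - integral {-L..t} (Pk L J k))) (at t within {-L..L})" if t: "t \<in> {-L..L}" for t
  proof -
    have "((\<lambda>x. \<Sum>i\<in>{1..J}. cavg L J k (real i) * psi1 L J i x) has_real_derivative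
        (\<Sum>i\<in>{1..J}. cavg L J k (real i) * (c i - integral {-L..t} (phi1 L J i)))) (at t within {-L..L})"
      by (intro DERIV_sum DERIV_cmult c t)
    moreover have "(\<Sum>i\<in>{1..J}. cavg L J k (real i) * (c i - integral {-L..t} (phi1 L J i)))
        = C - integral {-L..t} (Pk L J k)"
    proof -
      have "integral {-L..t} (Pk L J k) = (\<Sum>i\<in>{1..J}. integral {-L..t} (\<lambda>x. cavg L J k (real i) * phi1 L J i x))"
        unfolding Pk_def[abs_def]
        by (rule Henstock_Kurzweil_Integration.integral_sum) (auto intro: int_cmult phi1_integrable)
      also have "\<dots> = (\<Sum>i\<in>{1..J}. cavg L J k (real i) * integral {-L..t} (phi1 L J i))"
        by (simp add: integral_cmult)
      finally show ?thesis by (simp add: C_def right_diff_distrib sum_subtractf)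
    qed
    ultimately show ?thesis unfolding Sk_def[abs_def] by simp
  qed
  then show "\<exists>C. \<forall>t\<in>{-L..L}. (Sk L J k has_real_derivative (C - integral {-L..t} (Pk L J k))) (at t within {-L..L})"
    by blast
qed

lemma sf_L: "L > 0 \<Longrightarrow> sf L k L = 0"
proof -
  assume L: "L > 0"
  have "2 * pi * real k * (L + L) / (2 * L) = 2 * real k * pi" using L by (simp add: field_simps)
  then show ?thesis by (simp add: sf_def)
qed

lemma sf_mL: "sf L k (-L) = 0" by (simp add: sf_def)

lemma sf_deriv_int:
  assumes L: "L > 0" and t: "t \<in> {-L..L}"
  shows "om L k * cos (om L k * (t + L)) = om L k - integral {-L..t} (\<lambda>s. om L k ^ 2 * sf L k s)"
proof -
  define w where "w = om L k"
  have "((\<lambda>s. w ^ 2 * sf L k s) has_integral ((- w * cos (w * (t + L))) - (- w * cos (w * (-L + L))))) {-L..t}"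
  proof (rule fundamental_theorem_of_calculus)
    show "-L \<le> t" using t by simp
    fix x assume "x \<in> {-L..t}"
    have "((\<lambda>s. - w * cos (w * (s + L))) has_real_derivative (- w * (- sin (w * (x + L)) * (w * (1 + 0))))) (at x)"
      by (auto intro!: derivative_eq_intros)
    moreover have "- w * (- sin (w * (x + L)) * (w * (1 + 0))) = w ^ 2 * sf L k x"
      using L by (simp add: sf_alt w_def power2_eq_square)
    ultimately show "((\<lambda>s. - w * cos (w * (s + L))) has_vector_derivative (w ^ 2 * sf L k x)) (at x within {-L..t})"
      by (simp add: has_real_derivative_iff_has_vector_derivative[symmetric] has_field_derivative_at_within)
  qed
  then have "integral {-L..t} (\<lambda>s. w ^ 2 * sf L k s) = (- w * cos (w * (t + L))) - (- w * cos (w * (-L + L)))"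
    by (rule integral_unique)
  then show ?thesis by (simp add: w_def)
qed

lemma sf_has_deriv:
  assumes L: "L > 0"
  shows "(sf L k has_real_derivative (om L k * cos (om L k * (t + L)))) (at t)"
proof -
  have "((\<lambda>t. sin (om L k * (t + L))) has_real_derivative (cos (om L k * (t + L)) * (om L k * (1 + 0)))) (at t)"
    by (auto intro!: derivative_eq_intros)
  moreover have "sf L k = (\<lambda>t. sin (om L k * (t + L)))" using L by (simp add: sf_alt fun_eq_iff)
  ultimately show ?thesis by (simp add: mult.commute)
qed

lemma sf_cont: "continuous_on S (sf L k)"
proof (cases "L = 0")
  case True
  then have "sf L k = (\<lambda>t. 0)" by (simp add: sf_def fun_eq_iff)
  then show ?thesis by simp
next
  case False
  then show ?thesis unfolding sf_def by (intro continuous_intros) auto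
qed

definition Ek :: "real \<Rightarrow> nat \<Rightarrow> nat \<Rightarrow> real" where
  "Ek L J k = \<bar>Qc L J k - om L k ^ 2\<bar> + om L k ^ 3 * meshh L J / 2"

lemma Sk_bound:
  assumes L: "L > 0" and J: "2 \<le> J" and k: "k > 0" and t: "t \<in> {-L..L}"
  shows "\<bar>2 / meshh L J ^ 2 * Sk L J k t - sf L k t\<bar> \<le> 8 * L ^ 2 * Ek L J k"
proof -
  define a where "a = 2 / meshh L J ^ 2"
  define w where "w = om L k"
  define g where "g t = a * Sk L J k t - sf L k t" for t
  define r where "r s = a * Pk L J k s - w ^ 2 * sf L k s" for s
  obtain C where C: "\<forall>t\<in>{-L..L}. (Sk L J k has_real_derivative (C - integral {-L..t} (Pk L J k))) (at t within {-L..L})"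
    using Sk_props(3)[OF L] by blast
  have ir: "integral {-L..t} r = a * integral {-L..t} (Pk L J k) - integral {-L..t} (\<lambda>s. w ^ 2 * sf L k s)" for t
  proof -
    have i1: "(\<lambda>s. a * Pk L J k s) integrable_on {-L..t}" by (rule int_cmult[OF Pk_integrable])
    have i2: "(\<lambda>s. w ^ 2 * sf L k s) integrable_on {-L..t}"
      by (rule int_cmult[OF integrable_continuous_interval[OF sf_cont]])
    show ?thesis unfolding r_def integral_diff[OF i1 i2] by (simp add: integral_cmult)
  qed
  have dg: "\<forall>t\<in>{-L..L}. (g has_real_derivative ((a * C - w) - integral {-L..t} r)) (at t within {-L..L})"
  proof
    fix t assume t: "t \<in> {-L..L}"
    have "(g has_real_derivative (a * (C - integral {-L..t} (Pk L J k)) - w * cos (w * (t + L)))) (at t within {-L..L})"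
      unfolding g_def
      by (intro DERIV_diff DERIV_cmult) (use C t sf_has_deriv[OF L, of k t] in \<open>auto simp: w_def has_field_derivative_at_within\<close>)
    moreover have "a * (C - integral {-L..t} (Pk L J k)) - w * cos (w * (t + L)) = (a * C - w) - integral {-L..t} r"
      unfolding ir using sf_deriv_int[OF L t, of k] by (simp add: w_def algebra_simps)
    ultimately show "(g has_real_derivative ((a * C - w) - integral {-L..t} r)) (at t within {-L..L})" by simp
  qed
  have E0: "0 \<le> Ek L J k" using L J by (simp add: Ek_def om_def meshh_def)
  have bR: "\<forall>t\<in>{-L..L}. \<bar>integral {-L..t} r\<bar> \<le> 2 * L * Ek L J k"
  proof
    fix t assume t: "t \<in> {-L..L}"
    have ri: "r integrable_on {-L..t}"
      unfolding r_def by (rule integrable_diff[OF int_cmult[OF Pk_integrable] int_cmult[OF integrable_continuous_interval[OF sf_cont]]])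
    have hi: "(r has_integral integral {-L..t} r) {-L..t}" using ri by (rule integrable_integral)
    have bnd: "\<And>x. x \<in> {-L..t} - {-L} \<Longrightarrow> norm (r x) \<le> Ek L J k"
    proof -
      fix x assume x: "x \<in> {-L..t} - {-L}"
      then have "-L < x" "x \<le> L" using t by auto
      then show "norm (r x) \<le> Ek L J k"
        using Pk_bound[OF L J k] by (simp add: r_def a_def w_def Ek_def)
    qed
    have "norm (integral {-L..t} r) \<le> Ek L J k * (t - - L)"
      using has_integral_bound_real[where S="{-L}", OF E0 _ hi bnd] t by simp
    also have "\<dots> \<le> Ek L J k * (2 * L)" using t E0 by (intro mult_left_mono) auto
    finally show "\<bar>integral {-L..t} r\<bar> \<le> 2 * L * Ek L J k" by (simp add: mult.commute)
  qed
  have "\<forall>t\<in>{-L..L}. \<bar>g t\<bar> \<le> 4 * L * (2 * L * Ek L J k)"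
    by (rule ode_bound[OF L _ _ dg bR]) (simp_all add: g_def Sk_props[OF L] sf_L[OF L] sf_mL)
  then show ?thesis using t by (simp add: g_def a_def power2_eq_square algebra_simps)
qed

lemma max_second_deriv:
  fixes g g' :: "real \<Rightarrow> real"
  assumes z: "a < z" "z < b"
    and dg: "\<And>t. a < t \<Longrightarrow> t < b \<Longrightarrow> (g has_real_derivative g' t) (at t)"
    and dg': "(g' has_real_derivative c) (at z)"
    and mx: "\<And>t. a < t \<Longrightarrow> t < b \<Longrightarrow> g t \<le> g z"
  shows "c \<le> 0"
proof (rule ccontr)
  assume "\<not> c \<le> 0"
  hence c: "c > 0" by simp
  have g'z: "g' z = 0"
  proof (rule DERIV_local_max[OF dg[OF z]])
    show "0 < min (z - a) (b - z)" using z by simp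
    show "\<forall>y. \<bar>z - y\<bar> < min (z - a) (b - z) \<longrightarrow> g y \<le> g z"
      using mx by (auto simp: abs_if split: if_splits)
  qed
  obtain d where d: "d > 0" "\<And>h. h > 0 \<Longrightarrow> h < d \<Longrightarrow> g' z < g' (z + h)"
    using DERIV_pos_inc_right[OF dg' c] by blast
  define m where "m = min d (b - z)"
  define h0 where "h0 = m / 2"
  have mn: "m \<le> b - z" "m \<le> d" "0 < m" using d z by (auto simp: m_def)
  have h01: "0 < h0" using mn unfolding h0_def by linarith
  have h02: "h0 < d" using mn unfolding h0_def by linarith
  have h03: "z + h0 < b" using mn unfolding h0_def by linarith
  note h0 = h01 h02 h03
  have "g z < g (z + h0)"
  proof (rule DERIV_pos_imp_increasing_open[of z "z + h0" g])
    show "z < z + h0" using h0 by simp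
    fix x assume x: "z < x" "x < z + h0"
    show "\<exists>y. DERIV g x :> y \<and> 0 < y"
    proof (intro exI conjI)
      show "DERIV g x :> g' x" using dg[of x] x z h0 by simp
      have "g' z < g' (z + (x - z))" using d(2)[of "x - z"] x h0 by simp
      then show "0 < g' x" using g'z by simp
    qed
  next
    show "continuous_on {z..z + h0} g"
      by (rule DERIV_continuous_on[of _ _ g']) (use dg z h0 in \<open>auto intro: has_field_derivative_at_within\<close>)
  qed
  moreover have "g (z + h0) \<le> g z" using mx[of "z + h0"] z h0 by simp
  ultimately show False by simp
qed

lemma dom2_iff: "x \<in> dom2 L \<longleftrightarrow> -L < fst x \<and> fst x < L \<and> -L < snd x \<and> snd x < L"
  by (cases x) (auto simp: dom2_def)

lemma max_principle:
  fixes d :: "real \<times> real \<Rightarrow> real" and L :: real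
  assumes L: "L > 0"
    and cont: "continuous_on ({-L..L} \<times> {-L..L}) d"
    and out: "\<And>x. x \<notin> dom2 L \<Longrightarrow> d x = 0"
    and der: "\<And>x. x \<in> dom2 L \<Longrightarrow>
        ((\<lambda>t. d (t, snd x)) has_real_derivative Da x) (at (fst x)) \<and>
        ((\<lambda>s. d (fst x, s)) has_real_derivative Db x) (at (snd x)) \<and>
        ((\<lambda>t. Da (t, snd x)) has_real_derivative Daa x) (at (fst x)) \<and>
        ((\<lambda>s. Db (fst x, s)) has_real_derivative Dbb x) (at (snd x)) \<and>
        Daa x + Dbb x = 0"
  shows "d x0 \<le> 0"
proof (rule ccontr)
  assume "\<not> d x0 \<le> 0"
  hence dx0: "d x0 > 0" by simp
  define K where "K = {-L..L} \<times> {-L..L :: real}"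
  have x0: "x0 \<in> dom2 L"
  proof (rule ccontr)
    assume "x0 \<notin> dom2 L"
    then have "d x0 = 0" by (rule out)
    then show False using dx0 by simp
  qed
  hence x0K: "x0 \<in> K" by (cases x0) (auto simp: K_def dom2_def)
  define \<epsilon> where "\<epsilon> = d x0 / (2 * L ^ 2)"
  have eps: "\<epsilon> > 0" using dx0 L by (simp add: \<epsilon>_def)
  have epsL: "\<epsilon> * L ^ 2 < d x0" using dx0 L by (simp add: \<epsilon>_def)
  define e where "e x = d x + \<epsilon> * (fst x) ^ 2" for x
  have ce: "continuous_on K e" unfolding e_def K_def
    by (intro continuous_intros cont[unfolded K_def])
  have "compact K" unfolding K_def by (intro compact_Times compact_Icc)
  then obtain z where zK: "z \<in> K" and zmax: "\<And>y. y \<in> K \<Longrightarrow> e y \<le> e z"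
    using continuous_attains_sup[OF _ _ ce] x0K by blast
  have "e z \<ge> e x0" using zmax x0K by simp
  moreover have "0 \<le> \<epsilon> * (fst x0) ^ 2" using eps by simp
  ultimately have ez: "e z \<ge> d x0" by (simp add: e_def)
  have fz: "(fst z) ^ 2 \<le> L ^ 2" using zK L by (cases z) (auto simp: K_def abs_le_square_iff[symmetric] abs_le_iff)
  have zin: "z \<in> dom2 L"
  proof (rule ccontr)
    assume "z \<notin> dom2 L"
    hence "e z = \<epsilon> * (fst z) ^ 2" using out by (simp add: e_def)
    also have "\<dots> \<le> \<epsilon> * L ^ 2" using fz eps by (intro mult_left_mono) auto
    finally show False using ez epsL by simp
  qed
  obtain z1 z2 where z: "z = (z1, z2)" by (cases z)
  have z1: "-L < z1" "z1 < L" and z2: "-L < z2" "z2 < L" using zin by (auto simp: z dom2_def)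
  have Dz: "Daa z + Dbb z = 0" using der[OF zin] by simp
  have c1: "Daa z + 2 * \<epsilon> \<le> 0"
  proof (rule max_second_deriv[of "-L" z1 L "\<lambda>t. e (t, z2)" "\<lambda>t. Da (t, z2) + 2 * \<epsilon> * t"])
    show "-L < z1" "z1 < L" using z1 by auto
    fix t assume t: "-L < t" "t < L"
    hence tin: "(t, z2) \<in> dom2 L" using z2 by (simp add: dom2_def)
    have "((\<lambda>t. d (t, z2) + \<epsilon> * t ^ 2) has_real_derivative (Da (t, z2) + \<epsilon> * (2 * t))) (at t)"
      using der[OF tin] by (auto intro!: derivative_eq_intros)
    then show "((\<lambda>t. e (t, z2)) has_real_derivative Da (t, z2) + 2 * \<epsilon> * t) (at t)"
      by (simp add: e_def algebra_simps)
    show "e (t, z2) \<le> e (z1, z2)" using zmax[of "(t, z2)"] t z2 z by (simp add: K_def)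
  next
    have "((\<lambda>t. Da (t, z2) + 2 * \<epsilon> * t) has_real_derivative (Daa z + 2 * \<epsilon> * 1)) (at z1)"
      using der[OF zin] z by (auto intro!: derivative_eq_intros)
    then show "((\<lambda>t. Da (t, z2) + 2 * \<epsilon> * t) has_real_derivative Daa z + 2 * \<epsilon>) (at z1)" by simp
  qed
  have c2: "Dbb z \<le> 0"
  proof (rule max_second_deriv[of "-L" z2 L "\<lambda>s. e (z1, s)" "\<lambda>s. Db (z1, s)"])
    show "-L < z2" "z2 < L" using z2 by auto
    fix s assume s: "-L < s" "s < L"
    hence sin: "(z1, s) \<in> dom2 L" using z1 by (simp add: dom2_def)
    have "((\<lambda>s. d (z1, s) + \<epsilon> * z1 ^ 2) has_real_derivative (Db (z1, s) + 0)) (at s)"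
      using der[OF sin] by (auto intro!: derivative_eq_intros)
    then show "((\<lambda>s. e (z1, s)) has_real_derivative Db (z1, s)) (at s)"
      by (simp add: e_def)
    show "e (z1, s) \<le> e (z1, z2)" using zmax[of "(z1, s)"] s z1 z by (simp add: K_def)
  next
    show "((\<lambda>s. Db (z1, s)) has_real_derivative Dbb z) (at z2)"
      using der[OF zin] z by simp
  qed
  show False using c1 c2 Dz eps by simp
qed

lemma dirichlet_unique:
  assumes L: "L > 0" and u1: "dirichlet_sol L v u1" and u2: "dirichlet_sol L v u2"
  shows "u1 = u2"
proof -
  have le: "u x \<le> w x" if u: "dirichlet_sol L v u" and w: "dirichlet_sol L v w" for u w x
  proof -
    obtain A1 A2 A11 A22 where A: "\<forall>x\<in>dom2 L.
        ((\<lambda>t. u (t, snd x)) has_real_derivative A1 x) (at (fst x)) \<and>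
        ((\<lambda>s. u (fst x, s)) has_real_derivative A2 x) (at (snd x)) \<and>
        ((\<lambda>t. A1 (t, snd x)) has_real_derivative A11 x) (at (fst x)) \<and>
        ((\<lambda>s. A2 (fst x, s)) has_real_derivative A22 x) (at (snd x)) \<and>
        - (A11 x + A22 x) = v x"
      using u unfolding dirichlet_sol_def by blast
    obtain B1 B2 B11 B22 where B: "\<forall>x\<in>dom2 L.
        ((\<lambda>t. w (t, snd x)) has_real_derivative B1 x) (at (fst x)) \<and>
        ((\<lambda>s. w (fst x, s)) has_real_derivative B2 x) (at (snd x)) \<and>
        ((\<lambda>t. B1 (t, snd x)) has_real_derivative B11 x) (at (fst x)) \<and>
        ((\<lambda>s. B2 (fst x, s)) has_real_derivative B22 x) (at (snd x)) \<and>
        - (B11 x + B22 x) = v x"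
      using w unfolding dirichlet_sol_def by blast
    have "(\<lambda>x. u x - w x) x \<le> 0"
    proof (rule max_principle[OF L, where Da = "\<lambda>x. A1 x - B1 x" and Db = "\<lambda>x. A2 x - B2 x"
          and Daa = "\<lambda>x. A11 x - B11 x" and Dbb = "\<lambda>x. A22 x - B22 x"])
      show "continuous_on ({-L..L} \<times> {-L..L}) (\<lambda>x. u x - w x)"
        using u w unfolding dirichlet_sol_def by (intro continuous_on_diff) auto
      show "\<And>x. x \<notin> dom2 L \<Longrightarrow> u x - w x = 0" using u w unfolding dirichlet_sol_def by auto
      fix x assume x: "x \<in> dom2 L"
      show "((\<lambda>t. u (t, snd x) - w (t, snd x)) has_real_derivative A1 x - B1 x) (at (fst x)) \<and>
        ((\<lambda>s. u (fst x, s) - w (fst x, s)) has_real_derivative A2 x - B2 x) (at (snd x)) \<and>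
        ((\<lambda>t. A1 (t, snd x) - B1 (t, snd x)) has_real_derivative A11 x - B11 x) (at (fst x)) \<and>
        ((\<lambda>s. A2 (fst x, s) - B2 (fst x, s)) has_real_derivative A22 x - B22 x) (at (snd x)) \<and>
        A11 x - B11 x + (A22 x - B22 x) = 0"
        using A[rule_format, OF x] B[rule_format, OF x] by (auto intro!: DERIV_diff)
    qed
    then show ?thesis by simp
  qed
  show ?thesis using le[OF u1 u2] le[OF u2 u1] by (intro ext antisym)
qed

lemma invLap_eq: "L > 0 \<Longrightarrow> dirichlet_sol L v u \<Longrightarrow> invLap L v = u"
  unfolding invLap_def by (rule the_equality) (auto intro: dirichlet_unique)

definition coef :: "real \<Rightarrow> (nat \<Rightarrow> real) \<Rightarrow> nat \<Rightarrow> real" where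
  "coef L c k = c k / (2 * om L k ^ 2)"

definition Fsol :: "real \<Rightarrow> nat \<Rightarrow> (nat \<Rightarrow> real) \<Rightarrow> real \<times> real \<Rightarrow> real" where
  "Fsol L n c x = (\<Sum>k\<le>n. coef L c k * (sf L k (fst x) * sf L k (snd x)))"

definition Usol :: "real \<Rightarrow> nat \<Rightarrow> (nat \<Rightarrow> real) \<Rightarrow> real \<times> real \<Rightarrow> real" where
  "Usol L n c x = (if x \<in> dom2 L then Fsol L n c x else 0)"

definition sd :: "real \<Rightarrow> nat \<Rightarrow> real \<Rightarrow> real" where
  "sd L k t = om L k * cos (om L k * (t + L))"

lemma sd_has_deriv:
  assumes L: "L > 0"
  shows "(sd L k has_real_derivative (- (om L k ^ 2) * sf L k t)) (at t)"
proof -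
  have "((\<lambda>t. om L k * cos (om L k * (t + L))) has_real_derivative (om L k * (- sin (om L k * (t + L)) * (om L k * (1 + 0))))) (at t)"
    by (auto intro!: derivative_eq_intros)
  moreover have "om L k * (- sin (om L k * (t + L)) * (om L k * (1 + 0))) = - (om L k ^ 2) * sf L k t"
    using L by (simp add: sf_alt power2_eq_square)
  ultimately show ?thesis unfolding sd_def[abs_def] by (rule DERIV_cong)
qed

lemma sf_has_deriv': "L > 0 \<Longrightarrow> (sf L k has_real_derivative sd L k t) (at t)"
  using sf_has_deriv by (simp add: sd_def)

lemma sf_bound: "\<bar>sf L k t\<bar> \<le> 1" by (simp add: sf_def)

lemma Fsol_boundary:
  assumes L: "L > 0" and x: "x \<in> {-L..L} \<times> {-L..L}" "x \<notin> dom2 L"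
  shows "Fsol L n c x = 0"
proof -
  have "fst x = -L \<or> fst x = L \<or> snd x = -L \<or> snd x = L" using x by (cases x) (auto simp: dom2_def)
  then have p: "\<And>k. sf L k (fst x) * sf L k (snd x) = 0" using sf_L[OF L] sf_mL by auto
  show ?thesis unfolding Fsol_def by (rule sum.neutral) (simp add: p)
qed

lemma Fsol_cont: "continuous_on S (Fsol L n c)"
  unfolding Fsol_def[abs_def]
  by (intro continuous_intros continuous_on_compose2[OF sf_cont] ) auto

lemma Usol_sol:
  assumes L: "L > 0"
  shows "dirichlet_sol L (\<lambda>x. \<Sum>k\<le>n. c k * ek L k x) (Usol L n c)"
  unfolding dirichlet_sol_def
proof (intro conjI allI impI)
  show "continuous_on ({-L..L} \<times> {-L..L}) (Usol L n c)"
    by (rule continuous_on_eq[OF Fsol_cont]) (use Fsol_boundary[OF L] in \<open>auto simp: Usol_def\<close>)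
  show "\<And>x. x \<notin> dom2 L \<Longrightarrow> Usol L n c x = 0" by (simp add: Usol_def)
  define D1 where "D1 x = (\<Sum>k\<le>n. coef L c k * (sd L k (fst x) * sf L k (snd x)))" for x
  define D2 where "D2 x = (\<Sum>k\<le>n. coef L c k * (sf L k (fst x) * sd L k (snd x)))" for x
  define D11 where "D11 x = (\<Sum>k\<le>n. coef L c k * ((- (om L k ^ 2) * sf L k (fst x)) * sf L k (snd x)))" for x
  define D22 where "D22 x = (\<Sum>k\<le>n. coef L c k * (sf L k (fst x) * (- (om L k ^ 2) * sf L k (snd x))))" for x
  have "\<forall>x\<in>dom2 L.
        ((\<lambda>t. Usol L n c (t, snd x)) has_real_derivative D1 x) (at (fst x)) \<and>
        ((\<lambda>s. Usol L n c (fst x, s)) has_real_derivative D2 x) (at (snd x)) \<and>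
        ((\<lambda>t. D1 (t, snd x)) has_real_derivative D11 x) (at (fst x)) \<and>
        ((\<lambda>s. D2 (fst x, s)) has_real_derivative D22 x) (at (snd x)) \<and>
        - (D11 x + D22 x) = (\<Sum>k\<le>n. c k * ek L k x)"
  proof
    fix x assume x: "x \<in> dom2 L"
    obtain x1 x2 where xx: "x = (x1, x2)" by (cases x)
    have x1: "x1 \<in> {-L<..<L}" and x2: "x2 \<in> {-L<..<L}" using x xx by (auto simp: dom2_def)
    have a: "((\<lambda>t. Usol L n c (t, x2)) has_real_derivative D1 x) (at x1)"
    proof (rule has_field_derivative_transform_within_open[OF _ _ x1])
      show "((\<lambda>t. Fsol L n c (t, x2)) has_real_derivative D1 x) (at x1)"
        unfolding Fsol_def D1_def xx fst_conv snd_conv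
        by (intro DERIV_sum DERIV_cmult DERIV_cmult_right sf_has_deriv'[OF L])
      show "\<And>t. t \<in> {-L<..<L} \<Longrightarrow> Fsol L n c (t, x2) = Usol L n c (t, x2)"
        using x2 by (simp add: Usol_def dom2_def)
    qed simp
    have b: "((\<lambda>s. Usol L n c (x1, s)) has_real_derivative D2 x) (at x2)"
    proof (rule has_field_derivative_transform_within_open[OF _ _ x2])
      show "((\<lambda>s. Fsol L n c (x1, s)) has_real_derivative D2 x) (at x2)"
        unfolding Fsol_def D2_def xx fst_conv snd_conv
        by (intro DERIV_sum DERIV_cmult DERIV_cmult sf_has_deriv'[OF L])
      show "\<And>s. s \<in> {-L<..<L} \<Longrightarrow> Fsol L n c (x1, s) = Usol L n c (x1, s)"
        using x1 by (simp add: Usol_def dom2_def)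
    qed simp
    have c: "((\<lambda>t. D1 (t, x2)) has_real_derivative D11 x) (at x1)"
      unfolding D1_def D11_def xx fst_conv snd_conv
      by (intro DERIV_sum DERIV_cmult DERIV_cmult_right sd_has_deriv[OF L])
    have d: "((\<lambda>s. D2 (x1, s)) has_real_derivative D22 x) (at x2)"
      unfolding D2_def D22_def xx fst_conv snd_conv
      by (intro DERIV_sum DERIV_cmult sd_has_deriv[OF L])
    have e: "- (D11 x + D22 x) = (\<Sum>k\<le>n. c k * ek L k x)"
    proof -
      have "- (D11 x + D22 x) = (\<Sum>k\<le>n. coef L c k * (2 * om L k ^ 2) * (sf L k (fst x) * sf L k (snd x)))"
        unfolding D11_def D22_def by (simp add: sum.distrib[symmetric] sum_negf[symmetric] algebra_simps)
      also have "\<dots> = (\<Sum>k\<le>n. c k * ek L k x)"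
      proof (rule sum.cong[OF refl])
        fix k
        show "coef L c k * (2 * om L k ^ 2) * (sf L k (fst x) * sf L k (snd x)) = c k * ek L k x"
        proof (cases "k = 0")
          case True then show ?thesis by (simp add: ek_sf sf_zero)
        next
          case False
          then have "om L k \<noteq> 0" using om_pos[OF L] by (metis less_irrefl neq0_conv)
          then show ?thesis by (simp add: coef_def ek_sf)
        qed
      qed
      finally show ?thesis .
    qed
    show "((\<lambda>t. Usol L n c (t, snd x)) has_real_derivative D1 x) (at (fst x)) \<and>
        ((\<lambda>s. Usol L n c (fst x, s)) has_real_derivative D2 x) (at (snd x)) \<and>
        ((\<lambda>t. D1 (t, snd x)) has_real_derivative D11 x) (at (fst x)) \<and>
        ((\<lambda>s. D2 (fst x, s)) has_real_derivative D22 x) (at (snd x)) \<and>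
        - (D11 x + D22 x) = (\<Sum>k\<le>n. c k * ek L k x)"
      using a b c d e xx by simp
  qed
  then show "\<exists>D1 D2 D11 D22. \<forall>x\<in>dom2 L.
        ((\<lambda>t. Usol L n c (t, snd x)) has_real_derivative D1 x) (at (fst x)) \<and>
        ((\<lambda>s. Usol L n c (fst x, s)) has_real_derivative D2 x) (at (snd x)) \<and>
        ((\<lambda>t. D1 (t, snd x)) has_real_derivative D11 x) (at (fst x)) \<and>
        ((\<lambda>s. D2 (fst x, s)) has_real_derivative D22 x) (at (snd x)) \<and>
        - (D11 x + D22 x) = (\<Sum>k\<le>n. c k * ek L k x)"
    by blast
qed

lemma invLap_Vn:
  assumes L: "L > 0"
  shows "invLap L (\<lambda>x. \<Sum>k\<le>n. c k * ek L k x) = Usol L n c"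
  by (rule invLap_eq[OF L Usol_sol[OF L]])

lemma fin_Ioc: "emeasure lborel {a<..b::real} < top"
proof -
  have "bounded {a<..b}" by (rule bounded_subset[OF compact_imp_bounded[OF compact_Icc[of a b]]]) auto
  from emeasure_bounded_finite[OF this] show ?thesis by simp
qed

lemma prod_Ioc_integral:
  fixes f g :: "real \<Rightarrow> real"
  assumes fm: "f \<in> borel_measurable borel" and fb: "\<And>x. \<bar>f x\<bar> \<le> 1"
    and gm: "g \<in> borel_measurable borel" and gb: "\<And>x. \<bar>g x\<bar> \<le> 1"
  shows "(LINT y:{a<..b} \<times> {c<..d}|lborel. f (fst y) * g (snd y)) = (LBINT s:{a<..b}. f s) * (LBINT s:{c<..d}. g s)"
proof -
  define A where "A x = indicator {a<..b} x * f x" for x :: real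
  define B where "B y = indicator {c<..d} y * g y" for y :: real
  have Am: "A \<in> borel_measurable lborel" unfolding A_def using fm by measurable
  have Bm: "B \<in> borel_measurable lborel" unfolding B_def using gm by measurable
  have eq: "indicator ({a<..b} \<times> {c<..d}) y *\<^sub>R (f (fst y) * g (snd y)) = A (fst y) * B (snd y)" for y :: "real \<times> real"
    by (cases y) (simp add: A_def B_def indicator_def)
  have int: "integrable (lborel \<Otimes>\<^sub>M lborel) (\<lambda>(x, y). A x * B y)"
  proof -
    have S: "{a<..b} \<times> {c<..d} \<in> sets (lborel \<Otimes>\<^sub>M lborel)" by (intro pair_measureI) auto
    have fin: "emeasure (lborel \<Otimes>\<^sub>M lborel) ({a<..b} \<times> {c<..d}) < \<infinity>"
      by (subst lborel.emeasure_pair_measure_Times) (auto simp: ennreal_mult_less_top fin_Ioc)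
    have "integrable (lborel \<Otimes>\<^sub>M lborel) (\<lambda>z. indicator ({a<..b} \<times> {c<..d}) z *\<^sub>R (f (fst z) * g (snd z)))"
    proof (rule integrableI_bounded_set_indicator[OF S _ fin, where B=1])
      show "(\<lambda>z. f (fst z) * g (snd z)) \<in> borel_measurable (lborel \<Otimes>\<^sub>M lborel)"
        using fm gm by measurable
      show "AE x in lborel \<Otimes>\<^sub>M lborel. x \<in> {a<..b} \<times> {c<..d} \<longrightarrow> norm (f (fst x) * g (snd x)) \<le> 1"
        using fb gb by (auto simp: abs_mult intro!: mult_le_one)
    qed
    then show ?thesis using eq by (simp add: case_prod_beta')
  qed
  have "(LINT y:{a<..b} \<times> {c<..d}|lborel. f (fst y) * g (snd y)) = integral\<^sup>L lborel (\<lambda>y. A (fst y) * B (snd y))"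
    unfolding set_lebesgue_integral_def eq ..
  also have "\<dots> = integral\<^sup>L (lborel \<Otimes>\<^sub>M lborel) (\<lambda>(x, y). A x * B y)"
    by (simp add: lborel_prod case_prod_beta')
  also have "\<dots> = (\<integral>x. (\<integral>y. A x * B y \<partial>lborel) \<partial>lborel)"
    using lborel_pair.integral_fst[OF int] by simp
  also have "\<dots> = (\<integral>x. A x \<partial>lborel) * (\<integral>y. B y \<partial>lborel)"
    by simp
  also have "\<dots> = (LBINT s:{a<..b}. f s) * (LBINT s:{c<..d}. g s)"
    by (simp add: set_lebesgue_integral_def A_def B_def)
  finally show ?thesis .
qed

lemma sf_meas: "sf L k \<in> borel_measurable borel"
  by (rule borel_measurable_continuous_onI[OF sf_cont])

lemma measure_cell:
  assumes L: "L > 0" and J: "J > 0" and i: "1 \<le> i1" "1 \<le> i2"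
  shows "measure lborel (cell L J i1 i2) = meshh L J ^ 2"
proof -
  have le: "node L J (i - 1) \<le> node L J i" for i using node_mono[OF L J, of "i-1" i] by simp
  have len: "node L J i - node L J (i - 1) = meshh L J" if "1 \<le> i" for i
    using that by (simp add: node_def of_nat_diff algebra_simps)
  have "(LINT y:cell L J i1 i2|lborel. (\<lambda>_. 1::real) (fst y) * (\<lambda>_. 1::real) (snd y))
      = (LBINT s:{node L J (i1-1)<..node L J i1}. 1) * (LBINT s:{node L J (i2-1)<..node L J i2}. 1)"
    unfolding cell_def by (rule prod_Ioc_integral) auto
  also have "\<dots> = meshh L J ^ 2"
    using le len i by (simp add: set_integral_const power2_eq_square)
  finally have *: "(LINT y:cell L J i1 i2|lborel. 1::real) = meshh L J ^ 2" by simp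
  have fin: "emeasure lborel (cell L J i1 i2) \<noteq> \<infinity>"
  proof -
    have "bounded (cell L J i1 i2)" unfolding cell_def
      by (rule bounded_subset[OF bounded_Times[OF compact_imp_bounded[OF compact_Icc[of "node L J (i1-1)" "node L J i1"]] compact_imp_bounded[OF compact_Icc[of "node L J (i2-1)" "node L J i2"]]]]) auto
    from emeasure_bounded_finite[OF this] show ?thesis by simp
  qed
  have "cell L J i1 i2 \<in> sets (lborel \<Otimes>\<^sub>M lborel)" unfolding cell_def by (intro pair_measureI) auto
  hence cs: "cell L J i1 i2 \<in> sets lborel" by (simp only: lborel_prod)
  have "(LINT y:cell L J i1 i2|lborel. 1::real) = measure lborel (cell L J i1 i2)"
    using set_integral_const[OF cs fin, of "1::real"] by simp
  then show ?thesis using * by simp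
qed

lemma cell_sets: "cell L J i1 i2 \<in> sets lborel"
proof -
  have "cell L J i1 i2 \<in> sets (lborel \<Otimes>\<^sub>M lborel)" unfolding cell_def by (intro pair_measureI) auto
  then show ?thesis by (simp only: lborel_prod)
qed

lemma cell_fin: "emeasure lborel (cell L J i1 i2) < \<infinity>"
proof -
  have "bounded (cell L J i1 i2)" unfolding cell_def
    by (rule bounded_subset[OF bounded_Times[OF compact_imp_bounded[OF compact_Icc[of "node L J (i1-1)" "node L J i1"]] compact_imp_bounded[OF compact_Icc[of "node L J (i2-1)" "node L J i2"]]]]) auto
  from emeasure_bounded_finite[OF this] show ?thesis .
qed

lemma cell_sub:
  assumes L: "L > 0" and J: "J > 0" and i: "1 \<le> i1" "i1 \<le> J" "1 \<le> i2" "i2 \<le> J"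
  shows "cell L J i1 i2 \<subseteq> {-L..L} \<times> {-L..L}"
proof -
  have a: "-L \<le> node L J (i - 1)" "node L J i \<le> L" if "i \<le> J" for i
    using node_mono[OF L J, of 0 "i-1"] node_mono[OF L J, of i J] node_J[OF J] that by auto
  show ?thesis unfolding cell_def using a[OF i(2)] a[OF i(4)] by auto
qed

lemma sfsf_integrable: "integrable lborel (\<lambda>y. indicator (cell L J i1 i2) y *\<^sub>R (sf L k (fst y) * sf L k (snd y)))"
proof (rule integrableI_bounded_set_indicator[OF cell_sets _ cell_fin, where B=1])
  have "continuous_on UNIV (\<lambda>y::real\<times>real. sf L k (fst y) * sf L k (snd y))"
    by (intro continuous_on_mult continuous_on_compose2[OF sf_cont] continuous_on_fst continuous_on_snd continuous_on_id) auto
  then show "(\<lambda>y. sf L k (fst y) * sf L k (snd y)) \<in> borel_measurable lborel"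
    using borel_measurable_continuous_onI by simp
  show "AE x in lborel. x \<in> cell L J i1 i2 \<longrightarrow> norm (sf L k (fst x) * sf L k (snd x)) \<le> 1"
    using sf_bound by (auto simp: abs_mult intro!: mult_le_one)
qed

lemma cell_U:
  assumes L: "L > 0" and J: "J > 0" and i: "1 \<le> i1" "i1 \<le> J" "1 \<le> i2" "i2 \<le> J"
  shows "(LINT y:cell L J i1 i2|lborel. Usol L n c y) =
     (\<Sum>k\<le>n. coef L c k * (meshh L J * cavg L J k (real i1)) * (meshh L J * cavg L J k (real i2)))"
proof -
  have "(LINT y:cell L J i1 i2|lborel. Usol L n c y) = (LINT y:cell L J i1 i2|lborel. Fsol L n c y)"
  proof (rule set_lebesgue_integral_cong[OF cell_sets], intro allI impI)
    fix y assume y: "y \<in> cell L J i1 i2"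
    show "Usol L n c y = Fsol L n c y"
    proof (cases "y \<in> dom2 L")
      case True then show ?thesis by (simp add: Usol_def)
    next
      case False
      then show ?thesis using Fsol_boundary[OF L _ False] cell_sub[OF L J i] y by (auto simp: Usol_def)
    qed
  qed
  also have "\<dots> = (\<Sum>k\<le>n. coef L c k * (LINT y:cell L J i1 i2|lborel. sf L k (fst y) * sf L k (snd y)))"
  proof -
    have "(LINT y:cell L J i1 i2|lborel. Fsol L n c y) =
        integral\<^sup>L lborel (\<lambda>y. \<Sum>k\<le>n. coef L c k * (indicator (cell L J i1 i2) y *\<^sub>R (sf L k (fst y) * sf L k (snd y))))"
      unfolding set_lebesgue_integral_def Fsol_def by (simp add: sum_distrib_left mult.left_commute)
    also have "\<dots> = (\<Sum>k\<le>n. integral\<^sup>L lborel (\<lambda>y. coef L c k * (indicator (cell L J i1 i2) y *\<^sub>R (sf L k (fst y) * sf L k (snd y)))))"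
      by (rule Bochner_Integration.integral_sum) (intro integrable_mult_right sfsf_integrable)
    also have "\<dots> = (\<Sum>k\<le>n. coef L c k * (LINT y:cell L J i1 i2|lborel. sf L k (fst y) * sf L k (snd y)))"
      unfolding set_lebesgue_integral_def by simp
    finally show ?thesis .
  qed
  also have "\<dots> = (\<Sum>k\<le>n. coef L c k * (meshh L J * cavg L J k (real i1)) * (meshh L J * cavg L J k (real i2)))"
  proof (rule sum.cong[OF refl])
    fix k
    have "(LINT y:cell L J i1 i2|lborel. sf L k (fst y) * sf L k (snd y)) =
        (LBINT s:{node L J (i1-1)<..node L J i1}. sf L k s) * (LBINT s:{node L J (i2-1)<..node L J i2}. sf L k s)"
      unfolding cell_def by (rule prod_Ioc_integral[OF sf_meas sf_bound sf_meas sf_bound])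
    also have "\<dots> = (meshh L J * cavg L J k (real i1)) * (meshh L J * cavg L J k (real i2))"
      using cell_int1[OF L J i(1)] cell_int1[OF L J i(3)] by simp
    finally show "coef L c k * (LINT y:cell L J i1 i2|lborel. sf L k (fst y) * sf L k (snd y)) =
        coef L c k * (meshh L J * cavg L J k (real i1)) * (meshh L J * cavg L J k (real i2))" by simp
  qed
  finally show ?thesis .
qed

lemma Rh_formula:
  assumes L: "L > 0" and J: "J > 0"
  shows "Rh L J (\<lambda>x. \<Sum>k\<le>n. c k * ek L k x) x =
    (\<Sum>k\<le>n. coef L c k * (4 / meshh L J ^ 4) * (Pk L J k (fst x) * Sk L J k (snd x) + Sk L J k (fst x) * Pk L J k (snd x)))"
proof -
  define h where "h = meshh L J"
  have h: "h > 0" using L J by (simp add: h_def meshh_def)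
  define a where "a k i = cavg L J k (real i)" for k i
  define p where "p i = phi1 L J i (fst x)" for i
  define q where "q i = phi1 L J i (snd x)" for i
  define r where "r i = psi1 L J i (fst x)" for i
  define s where "s i = psi1 L J i (snd x)" for i
  have "Rh L J (\<lambda>x. \<Sum>k\<le>n. c k * ek L k x) x =
     (\<Sum>i1\<in>{1..J}. \<Sum>i2\<in>{1..J}. (\<Sum>k\<le>n. coef L c k * (8 / (3 * h ^ 2)) * a k i1 * a k i2) *
        (3 / (2 * h ^ 2) * (p i1 * s i2 + r i1 * q i2)))"
  proof -
    have "(8 / (3 * h ^ 2) * (1 / measure lborel (cell L J i1 i2)) * (LINT y:cell L J i1 i2|lborel. Usol L n c y))
        = (\<Sum>k\<le>n. coef L c k * (8 / (3 * h ^ 2)) * a k i1 * a k i2)"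
      if i: "i1 \<in> {1..J}" "i2 \<in> {1..J}" for i1 i2
    proof -
      have i': "1 \<le> i1" "i1 \<le> J" "1 \<le> i2" "i2 \<le> J" using i by auto
      show ?thesis unfolding cell_U[OF L J i'] measure_cell[OF L J i'(1,3)] h_def[symmetric] a_def
        using h by (simp add: sum_distrib_left field_simps power2_eq_square)
    qed
    then show ?thesis
      unfolding Rh_def invLap_Vn[OF L] bphi_def h_def[symmetric] p_def q_def r_def s_def
      by (intro sum.cong refl) simp
  qed
  also have "\<dots> = (\<Sum>k\<le>n. coef L c k * (4 / h ^ 4) *
      (\<Sum>i1\<in>{1..J}. \<Sum>i2\<in>{1..J}. a k i1 * a k i2 * (p i1 * s i2 + r i1 * q i2)))"
  proof -
    have "(\<Sum>i1\<in>{1..J}. \<Sum>i2\<in>{1..J}. (\<Sum>k\<le>n. coef L c k * (8 / (3 * h ^ 2)) * a k i1 * a k i2) *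
        (3 / (2 * h ^ 2) * (p i1 * s i2 + r i1 * q i2))) =
      (\<Sum>i1\<in>{1..J}. \<Sum>i2\<in>{1..J}. \<Sum>k\<le>n. coef L c k * (4 / h ^ 4) * (a k i1 * a k i2 * (p i1 * s i2 + r i1 * q i2)))"
    proof (intro sum.cong refl)
      fix i1 i2
      show "(\<Sum>k\<le>n. coef L c k * (8 / (3 * h ^ 2)) * a k i1 * a k i2) * (3 / (2 * h ^ 2) * (p i1 * s i2 + r i1 * q i2)) =
          (\<Sum>k\<le>n. coef L c k * (4 / h ^ 4) * (a k i1 * a k i2 * (p i1 * s i2 + r i1 * q i2)))"
        unfolding sum_distrib_right
      proof (rule sum.cong[OF refl])
        fix k
        show "coef L c k * (8 / (3 * h ^ 2)) * a k i1 * a k i2 * (3 / (2 * h ^ 2) * (p i1 * s i2 + r i1 * q i2)) =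
          coef L c k * (4 / h ^ 4) * (a k i1 * a k i2 * (p i1 * s i2 + r i1 * q i2))"
          using h by (simp add: field_simps power2_eq_square power4_eq_xxxx)
      qed
    qed
    also have "\<dots> = (\<Sum>k\<le>n. \<Sum>i1\<in>{1..J}. \<Sum>i2\<in>{1..J}. coef L c k * (4 / h ^ 4) * (a k i1 * a k i2 * (p i1 * s i2 + r i1 * q i2)))"
    proof -
      have "(\<Sum>i1\<in>{1..J}. \<Sum>i2\<in>{1..J}. \<Sum>k\<le>n. coef L c k * (4 / h ^ 4) * (a k i1 * a k i2 * (p i1 * s i2 + r i1 * q i2)))
         = (\<Sum>i1\<in>{1..J}. \<Sum>k\<le>n. \<Sum>i2\<in>{1..J}. coef L c k * (4 / h ^ 4) * (a k i1 * a k i2 * (p i1 * s i2 + r i1 * q i2)))"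
        by (rule sum.cong[OF refl]) (rule sum.swap)
      also have "\<dots> = (\<Sum>k\<le>n. \<Sum>i1\<in>{1..J}. \<Sum>i2\<in>{1..J}. coef L c k * (4 / h ^ 4) * (a k i1 * a k i2 * (p i1 * s i2 + r i1 * q i2)))"
        by (rule sum.swap)
      finally show ?thesis .
    qed
    also have "\<dots> = (\<Sum>k\<le>n. coef L c k * (4 / h ^ 4) *
      (\<Sum>i1\<in>{1..J}. \<Sum>i2\<in>{1..J}. a k i1 * a k i2 * (p i1 * s i2 + r i1 * q i2)))"
      by (simp add: sum_distrib_left)
    finally show ?thesis .
  qed
  also have "\<dots> = (\<Sum>k\<le>n. coef L c k * (4 / h ^ 4) * (Pk L J k (fst x) * Sk L J k (snd x) + Sk L J k (fst x) * Pk L J k (snd x)))"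
  proof (rule sum.cong[OF refl])
    fix k
    have "(\<Sum>i1\<in>{1..J}. \<Sum>i2\<in>{1..J}. a k i1 * a k i2 * (p i1 * s i2 + r i1 * q i2))
        = (\<Sum>i1\<in>{1..J}. a k i1 * p i1) * (\<Sum>i2\<in>{1..J}. a k i2 * s i2) + (\<Sum>i1\<in>{1..J}. a k i1 * r i1) * (\<Sum>i2\<in>{1..J}. a k i2 * q i2)"
    proof -
      have "(\<Sum>i1\<in>{1..J}. \<Sum>i2\<in>{1..J}. a k i1 * a k i2 * (p i1 * s i2 + r i1 * q i2))
          = (\<Sum>i1\<in>{1..J}. \<Sum>i2\<in>{1..J}. (a k i1 * p i1) * (a k i2 * s i2)) + (\<Sum>i1\<in>{1..J}. \<Sum>i2\<in>{1..J}. (a k i1 * r i1) * (a k i2 * q i2))"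
        by (simp add: sum.distrib[symmetric] algebra_simps)
      also have "\<dots> = (\<Sum>i1\<in>{1..J}. a k i1 * p i1) * (\<Sum>i2\<in>{1..J}. a k i2 * s i2) + (\<Sum>i1\<in>{1..J}. a k i1 * r i1) * (\<Sum>i2\<in>{1..J}. a k i2 * q i2)"
        by (simp only: sum_product)
      finally show ?thesis .
    qed
    also have "\<dots> = Pk L J k (fst x) * Sk L J k (snd x) + Sk L J k (fst x) * Pk L J k (snd x)"
      by (simp add: Pk_def Sk_def a_def p_def q_def r_def s_def)
    finally show "coef L c k * (4 / h ^ 4) * (\<Sum>i1\<in>{1..J}. \<Sum>i2\<in>{1..J}. a k i1 * a k i2 * (p i1 * s i2 + r i1 * q i2))
      = coef L c k * (4 / h ^ 4) * (Pk L J k (fst x) * Sk L J k (snd x) + Sk L J k (fst x) * Pk L J k (snd x))" by simp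
  qed
  finally show ?thesis by (simp add: h_def)
qed

lemma prod_err:
  fixes a b u v e1 e2 :: real
  assumes "\<bar>a - u\<bar> \<le> e1" "\<bar>b - v\<bar> \<le> e2" "\<bar>u\<bar> \<le> 1" "\<bar>v\<bar> \<le> 1"
  shows "\<bar>a * b - u * v\<bar> \<le> e1 * (1 + e2) + e2"
proof -
  have b: "\<bar>b\<bar> \<le> 1 + e2" using assms by linarith
  have "\<bar>a * b - u * v\<bar> = \<bar>(a - u) * b + u * (b - v)\<bar>" by (simp add: algebra_simps)
  also have "\<dots> \<le> \<bar>a - u\<bar> * \<bar>b\<bar> + \<bar>u\<bar> * \<bar>b - v\<bar>" by (simp add: abs_mult abs_triangle_ineq order_trans[OF abs_triangle_ineq])
  also have "\<dots> \<le> e1 * (1 + e2) + 1 * e2"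
    using assms b by (intro add_mono mult_mono) auto
  finally show ?thesis by simp
qed

definition errk :: "real \<Rightarrow> nat \<Rightarrow> nat \<Rightarrow> real" where
  "errk L J k = Ek L J k / om L k ^ 2 * (1 + 8 * L ^ 2 * Ek L J k) + 8 * L ^ 2 * Ek L J k"

lemma term_err:
  assumes L: "L > 0" and J: "2 \<le> J" and k: "k > 0" and x: "x \<in> dom2 L"
  shows "\<bar>coef L c k * (4 / meshh L J ^ 4) * (Pk L J k (fst x) * Sk L J k (snd x) + Sk L J k (fst x) * Pk L J k (snd x))
          - c k * ek L k x\<bar> \<le> \<bar>c k\<bar> * errk L J k"
proof -
  define h where "h = meshh L J"
  define w where "w = om L k"
  define E where "E = Ek L J k"
  have h: "h > 0" using L J by (simp add: h_def meshh_def)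
  have w: "w > 0" using L k by (simp add: w_def om_pos)
  define Pn where "Pn t = 2 / (w ^ 2 * h ^ 2) * Pk L J k t" for t
  define Sn where "Sn t = 2 / h ^ 2 * Sk L J k t" for t
  obtain x1 x2 where xx: "x = (x1, x2)" by (cases x)
  have x12: "-L < x1" "x1 < L" "-L < x2" "x2 < L" using x xx by (auto simp: dom2_def)
  have Pb: "\<bar>Pn t - sf L k t\<bar> \<le> E / w ^ 2" if "-L < t" "t \<le> L" for t
  proof -
    have "\<bar>2 / h ^ 2 * Pk L J k t - w ^ 2 * sf L k t\<bar> \<le> E"
      using Pk_bound[OF L J k that] by (simp add: h_def w_def E_def Ek_def)
    moreover have "Pn t - sf L k t = (2 / h ^ 2 * Pk L J k t - w ^ 2 * sf L k t) / w ^ 2"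
      using w by (simp add: Pn_def field_simps)
    ultimately show ?thesis using w by (simp add: abs_divide divide_right_mono)
  qed
  have Sb: "\<bar>Sn t - sf L k t\<bar> \<le> 8 * L ^ 2 * E" if "-L \<le> t" "t \<le> L" for t
    using Sk_bound[OF L J k] that by (simp add: Sn_def h_def E_def)
  have f1: "\<bar>sf L k t\<bar> \<le> 1" for t by (rule sf_bound)
  have e1: "\<bar>Pn x1 * Sn x2 - sf L k x1 * sf L k x2\<bar> \<le> errk L J k"
    using prod_err[OF Pb Sb f1 f1, of x1 x2] x12 by (simp add: errk_def E_def w_def)
  have e2: "\<bar>Sn x1 * Pn x2 - sf L k x1 * sf L k x2\<bar> \<le> errk L J k"
  proof -
    have "\<bar>Sn x1 * Pn x2 - sf L k x1 * sf L k x2\<bar> \<le> 8 * L ^ 2 * E * (1 + E / w ^ 2) + E / w ^ 2"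
      using prod_err[OF Sb Pb f1 f1, of x1 x2] x12 by simp
    also have "\<dots> = errk L J k" by (simp add: errk_def E_def w_def algebra_simps)
    finally show ?thesis .
  qed
  have eq: "coef L c k * (4 / h ^ 4) * (Pk L J k x1 * Sk L J k x2 + Sk L J k x1 * Pk L J k x2)
      = c k * ((Pn x1 * Sn x2 + Sn x1 * Pn x2) / 2)"
    using h w by (simp add: coef_def Pn_def Sn_def w_def field_simps power2_eq_square power4_eq_xxxx)
  have "c k * ((Pn x1 * Sn x2 + Sn x1 * Pn x2) / 2) - c k * (sf L k x1 * sf L k x2)
      = c k * (((Pn x1 * Sn x2 - sf L k x1 * sf L k x2) + (Sn x1 * Pn x2 - sf L k x1 * sf L k x2)) / 2)"
    by (simp add: field_simps)
  then have "\<bar>c k * ((Pn x1 * Sn x2 + Sn x1 * Pn x2) / 2) - c k * (sf L k x1 * sf L k x2)\<bar>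
      = \<bar>c k\<bar> * \<bar>((Pn x1 * Sn x2 - sf L k x1 * sf L k x2) + (Sn x1 * Pn x2 - sf L k x1 * sf L k x2)) / 2\<bar>"
    by (simp only: abs_mult)
  also have "\<dots> \<le> \<bar>c k\<bar> * errk L J k"
    using e1 e2 by (intro mult_left_mono) auto
  finally show ?thesis using eq by (simp add: xx h_def ek_sf)
qed

lemma meshh_lim: "L > 0 \<Longrightarrow> filterlim (\<lambda>m. meshh L (2 ^ m)) (at_right 0) sequentially"
proof -
  assume L: "L > 0"
  have "(\<lambda>m. meshh L (2 ^ m)) = (\<lambda>m. 2 * L / 2 ^ m)" by (simp add: meshh_def fun_eq_iff)
  moreover have "filterlim (\<lambda>m::nat. 2 * L / 2 ^ m) (at_right 0) sequentially"
    using L by real_asymp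
  ultimately show ?thesis by simp
qed

lemma Ek_lim:
  assumes L: "L > 0" and k: "k > 0"
  shows "(\<lambda>m. Ek L (2 ^ m) k) \<longlonglongrightarrow> 0"
proof -
  define w where "w = om L k"
  have w: "w > 0" using L k by (simp add: w_def om_pos)
  have Q: "((\<lambda>h. 8 * sin (w * h / 2) ^ 3 / (w * h ^ 3)) \<longlongrightarrow> w ^ 2) (at_right 0)"
    using w by real_asymp (simp add: field_simps power2_eq_square power3_eq_cube)
  have hl: "((\<lambda>h::real. h) \<longlongrightarrow> 0) (at_right 0)" by (rule tendsto_ident_at)
  have "((\<lambda>h. \<bar>8 * sin (w * h / 2) ^ 3 / (w * h ^ 3) - w ^ 2\<bar> + w ^ 3 * h / 2) \<longlongrightarrow> \<bar>w ^ 2 - w ^ 2\<bar> + w ^ 3 * 0 / 2) (at_right 0)"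
    by (intro tendsto_intros Q hl) auto
  then have Q2: "((\<lambda>h. \<bar>8 * sin (w * h / 2) ^ 3 / (w * h ^ 3) - w ^ 2\<bar> + w ^ 3 * h / 2) \<longlongrightarrow> 0) (at_right 0)"
    by simp
  have "((\<lambda>m. \<bar>8 * sin (w * meshh L (2 ^ m) / 2) ^ 3 / (w * meshh L (2 ^ m) ^ 3) - w ^ 2\<bar> + w ^ 3 * meshh L (2 ^ m) / 2) \<longlongrightarrow> 0) sequentially"
    by (rule filterlim_compose[OF Q2 meshh_lim[OF L]])
  then show ?thesis by (simp add: Ek_def Qc_def w_def)
qed

lemma errk_lim:
  assumes L: "L > 0" and k: "k > 0"
  shows "(\<lambda>m. errk L (2 ^ m) k) \<longlonglongrightarrow> 0"
proof -
  have E: "(\<lambda>m. Ek L (2 ^ m) k) \<longlonglongrightarrow> 0" by (rule Ek_lim[OF L k])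
  have "(\<lambda>m. Ek L (2 ^ m) k / om L k ^ 2 * (1 + 8 * L ^ 2 * Ek L (2 ^ m) k) + 8 * L ^ 2 * Ek L (2 ^ m) k)
      \<longlonglongrightarrow> 0 / om L k ^ 2 * (1 + 8 * L ^ 2 * 0) + 8 * L ^ 2 * 0"
    by (intro tendsto_intros E) (use om_pos[OF L k] in simp)
  then show ?thesis by (simp add: errk_def)
qed

lemma psi1_meas_bound:
  assumes L: "L > 0"
  shows "psi1 L J i \<in> borel_measurable borel" "\<exists>B. \<forall>t. \<bar>psi1 L J i t\<bar> \<le> B"
proof -
  have P: "psiP L (phi1 L J i) (psi1 L J i)" by (rule psi1_P'[OF L])
  then obtain c where c: "\<forall>t\<in>{-L..L}. (psi1 L J i has_real_derivative (c - integral {-L..t} (phi1 L J i))) (at t within {-L..L})"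
    unfolding psiP_def by blast
  have cont: "continuous_on {-L..L} (psi1 L J i)"
    by (rule DERIV_continuous_on) (use c in auto)
  have out: "\<And>t. t \<notin> {-L..L} \<Longrightarrow> psi1 L J i t = 0" using P unfolding psiP_def by blast
  have eq: "psi1 L J i = (\<lambda>t. indicator {-L..L} t *\<^sub>R psi1 L J i t)"
    using out by (auto simp: fun_eq_iff indicator_def)
  show "psi1 L J i \<in> borel_measurable borel"
    by (subst eq, rule borel_measurable_continuous_on_indicator[OF _ cont]) auto
  have "bounded (psi1 L J i ` {-L..L})"
    by (rule compact_imp_bounded[OF compact_continuous_image[OF cont compact_Icc]])
  then obtain B where B0: "\<forall>t\<in>{-L..L}. \<bar>psi1 L J i t\<bar> \<le> B"
    unfolding bounded_iff by auto
  note B = B0[rule_format]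
  have "\<bar>psi1 L J i t\<bar> \<le> max B 0" for t
    using B[of t] out[of t] by (cases "t \<in> {-L..L}") auto
  then show "\<exists>B. \<forall>t. \<bar>psi1 L J i t\<bar> \<le> B" by blast
qed

lemma sum_bounded:
  fixes f :: "'i \<Rightarrow> 'a \<Rightarrow> real"
  assumes "finite I" "\<And>i. i \<in> I \<Longrightarrow> \<exists>B. \<forall>x. \<bar>f i x\<bar> \<le> B"
  shows "\<exists>B. \<forall>x. \<bar>\<Sum>i\<in>I. f i x\<bar> \<le> B"
proof -
  obtain B where B: "\<And>i x. i \<in> I \<Longrightarrow> \<bar>f i x\<bar> \<le> B i" using assms(2) by metis
  have "\<bar>\<Sum>i\<in>I. f i x\<bar> \<le> (\<Sum>i\<in>I. B i)" for x
    by (rule order_trans[OF sum_abs sum_mono]) (use B in auto)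
  then show ?thesis by blast
qed

lemma prod_bounded:
  fixes f g :: "'a \<Rightarrow> real"
  assumes "\<exists>B. \<forall>x. \<bar>f x\<bar> \<le> B" "\<exists>B. \<forall>x. \<bar>g x\<bar> \<le> B"
  shows "\<exists>B. \<forall>x. \<bar>f x * g x\<bar> \<le> B"
proof -
  obtain A B where A: "\<And>x. \<bar>f x\<bar> \<le> A" and B: "\<And>x. \<bar>g x\<bar> \<le> B" using assms by blast
  have "\<bar>f x * g x\<bar> \<le> A * B" for x unfolding abs_mult
    by (rule mult_mono[OF A B]) (use A[of x] in auto)
  then show ?thesis by blast
qed

lemma Pk_meas: "Pk L J k \<in> borel_measurable borel"
  unfolding Pk_def[abs_def] using phi1_meas by measurable

lemma Pk_bnd: "\<exists>B. \<forall>t. \<bar>Pk L J k t\<bar> \<le> B"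
  unfolding Pk_def
  by (intro sum_bounded prod_bounded) (auto intro: phi1_bound)

lemma Sk_meas: "L > 0 \<Longrightarrow> Sk L J k \<in> borel_measurable borel"
  unfolding Sk_def[abs_def] using psi1_meas_bound(1) by measurable

lemma Sk_bnd: "L > 0 \<Longrightarrow> \<exists>B. \<forall>t. \<bar>Sk L J k t\<bar> \<le> B"
  unfolding Sk_def
  by (intro sum_bounded prod_bounded psi1_meas_bound(2)) auto

lemma meas_prod2:
  fixes F G :: "real \<Rightarrow> real"
  assumes "F \<in> borel_measurable borel" "G \<in> borel_measurable borel"
  shows "(\<lambda>x::real \<times> real. F (fst x) * G (snd x)) \<in> borel_measurable lborel"
proof -
  have "(\<lambda>x. F (fst x) * G (snd x)) \<in> borel_measurable (lborel \<Otimes>\<^sub>M lborel)" using assms by measurable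
  then show ?thesis by (simp only: lborel_prod)
qed

definition wfun :: "real \<Rightarrow> nat \<Rightarrow> (nat \<Rightarrow> real) \<Rightarrow> nat \<Rightarrow> real \<times> real \<Rightarrow> real" where
  "wfun L n c J x = (\<Sum>k\<le>n. c k * (sf L k (fst x) * sf L k (snd x))
      - coef L c k * (4 / meshh L J ^ 4) * (Pk L J k (fst x) * Sk L J k (snd x))
      - coef L c k * (4 / meshh L J ^ 4) * (Sk L J k (fst x) * Pk L J k (snd x)))"

lemma wfun_eq:
  assumes L: "L > 0" and J: "J > 0"
  shows "(\<lambda>x. \<Sum>k\<le>n. c k * ek L k x) x - Rh L J (\<lambda>x. \<Sum>k\<le>n. c k * ek L k x) x = wfun L n c J x"
  unfolding Rh_formula[OF L J] wfun_def
  by (simp add: ek_sf sum_subtractf[symmetric] algebra_simps)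

lemma wfun_meas:
  assumes L: "L > 0"
  shows "wfun L n c J \<in> borel_measurable lborel"
proof -
  note m = meas_prod2[OF sf_meas sf_meas] meas_prod2[OF Pk_meas Sk_meas[OF L]] meas_prod2[OF Sk_meas[OF L] Pk_meas]
  show ?thesis unfolding wfun_def[abs_def]
    by (intro borel_measurable_sum borel_measurable_diff borel_measurable_times borel_measurable_const m)
qed

lemma wfun_bnd:
  assumes L: "L > 0"
  shows "\<exists>B. \<forall>x. \<bar>wfun L n c J x\<bar> \<le> B"
proof -
  have b: "\<exists>B. \<forall>x. \<bar>f x\<bar> \<le> B" if "\<exists>B. \<forall>x. \<bar>f x\<bar> \<le> B" for f :: "real \<times> real \<Rightarrow> real" using that .
  have sfb: "\<exists>B. \<forall>x. \<bar>sf L k x\<bar> \<le> B" for k using sf_bound by blast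
  have c: "\<exists>B. \<forall>x::real\<times>real. \<bar>a\<bar> \<le> B" for a :: real by blast
  have fst_b: "\<exists>B. \<forall>x::real\<times>real. \<bar>f (fst x)\<bar> \<le> B" if "\<exists>B. \<forall>t. \<bar>f t\<bar> \<le> B" for f :: "real \<Rightarrow> real"
    using that by blast
  have snd_b: "\<exists>B. \<forall>x::real\<times>real. \<bar>f (snd x)\<bar> \<le> B" if "\<exists>B. \<forall>t. \<bar>f t\<bar> \<le> B" for f :: "real \<Rightarrow> real"
    using that by blast
  have diff_b: "\<exists>B. \<forall>x::real\<times>real. \<bar>f x - g x\<bar> \<le> B" if a1: "\<exists>B. \<forall>x. \<bar>f x\<bar> \<le> B" and a2: "\<exists>B. \<forall>x. \<bar>g x\<bar> \<le> B" for f g :: "real\<times>real \<Rightarrow> real"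
  proof -
    obtain A B where fa: "\<And>x. \<bar>f x\<bar> \<le> A" and gb: "\<And>x. \<bar>g x\<bar> \<le> B" using a1 a2 by blast
    have "\<bar>f x - g x\<bar> \<le> A + B" for x by (rule order_trans[OF abs_triangle_ineq4 add_mono[OF fa gb]])
    then show ?thesis by blast
  qed
  show ?thesis unfolding wfun_def
    by (intro sum_bounded diff_b prod_bounded c fst_b snd_b sfb Pk_bnd Sk_bnd[OF L] finite_atMost)
qed

lemma dom2_sets: "dom2 L \<in> sets lborel"
proof -
  have "dom2 L \<in> sets (lborel \<Otimes>\<^sub>M lborel)" unfolding dom2_def by (intro pair_measureI) auto
  then show ?thesis by (simp only: lborel_prod)
qed

lemma dom2_fin: "emeasure lborel (dom2 L) < \<infinity>"
proof -
  have "bounded (dom2 L)" unfolding dom2_def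
    by (rule bounded_subset[OF bounded_Times[OF compact_imp_bounded[OF compact_Icc[of "-L" L]] compact_imp_bounded[OF compact_Icc[of "-L" L]]]]) auto
  from emeasure_bounded_finite[OF this] show ?thesis .
qed

lemma wfun_integrable:
  assumes L: "L > 0" and p: "p \<ge> 1"
  shows "set_integrable lborel (dom2 L) (\<lambda>x. \<bar>wfun L n c J x\<bar> powr p)"
proof -
  obtain B where B: "\<And>x. \<bar>wfun L n c J x\<bar> \<le> B" using wfun_bnd[OF L] by blast
  have wm: "wfun L n c J \<in> borel_measurable lborel" by (rule wfun_meas[OF L])
  show ?thesis unfolding set_integrable_def
  proof (rule integrableI_bounded_set_indicator[OF dom2_sets _ dom2_fin, where B = "B powr p"])
    show "(\<lambda>x. \<bar>wfun L n c J x\<bar> powr p) \<in> borel_measurable lborel" using wm by measurable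
    show "AE x in lborel. x \<in> dom2 L \<longrightarrow> norm (\<bar>wfun L n c J x\<bar> powr p) \<le> B powr p"
      using B p by (auto intro!: powr_mono2)
  qed
qed

lemma const_set_integrable: "set_integrable lborel (dom2 L) (\<lambda>x. C::real)"
  unfolding set_integrable_def
  by (rule integrableI_bounded_set_indicator[OF dom2_sets _ dom2_fin, where B="\<bar>C\<bar>"]) auto

lemma wfun_bound:
  assumes L: "L > 0" and J: "2 \<le> J" and x: "x \<in> dom2 L"
  shows "\<bar>wfun L n c J x\<bar> \<le> (\<Sum>k\<le>n. \<bar>c k\<bar> * (if k = 0 then 0 else errk L J k))"
proof -
  have "\<bar>wfun L n c J x\<bar> \<le> (\<Sum>k\<le>n. \<bar>c k * (sf L k (fst x) * sf L k (snd x))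
      - coef L c k * (4 / meshh L J ^ 4) * (Pk L J k (fst x) * Sk L J k (snd x))
      - coef L c k * (4 / meshh L J ^ 4) * (Sk L J k (fst x) * Pk L J k (snd x))\<bar>)"
    unfolding wfun_def by (rule sum_abs)
  also have "\<dots> \<le> (\<Sum>k\<le>n. \<bar>c k\<bar> * (if k = 0 then 0 else errk L J k))"
  proof (rule sum_mono)
    fix k
    show "\<bar>c k * (sf L k (fst x) * sf L k (snd x))
      - coef L c k * (4 / meshh L J ^ 4) * (Pk L J k (fst x) * Sk L J k (snd x))
      - coef L c k * (4 / meshh L J ^ 4) * (Sk L J k (fst x) * Pk L J k (snd x))\<bar>
      \<le> \<bar>c k\<bar> * (if k = 0 then 0 else errk L J k)"
    proof (cases "k = 0")
      case True then show ?thesis by (simp add: sf_zero coef_def om_def)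
    next
      case False
      then have k: "k > 0" by simp
      have "\<bar>coef L c k * (4 / meshh L J ^ 4) * (Pk L J k (fst x) * Sk L J k (snd x) + Sk L J k (fst x) * Pk L J k (snd x))
          - c k * ek L k x\<bar> \<le> \<bar>c k\<bar> * errk L J k"
        by (rule term_err[OF L J k x])
      then show ?thesis using False by (simp add: ek_sf algebra_simps abs_minus_commute)
    qed
  qed
  finally show ?thesis .
qed

theorem lemma5p3:
  fixes L p :: real and n :: nat and v :: "real \<times> real \<Rightarrow> real"
  assumes "L > 0" and "p \<ge> 1" and "v \<in> Vn L n"
  shows "(\<forall>m. set_integrable lborel (dom2 L) (\<lambda>x. \<bar>v x - Rh L (2 ^ m) v x\<bar> powr p)) \<and>
         (\<lambda>m. Lp_norm L p (\<lambda>x. v x - Rh L (2 ^ m) v x)) \<longlonglongrightarrow> 0"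
proof -
  have L: "L > 0" and p: "p \<ge> 1" using assms by auto
  obtain c where v: "v = (\<lambda>x. \<Sum>k\<le>n. c k * ek L k x)" using assms(3) unfolding Vn_def by blast
  have weq: "v x - Rh L (2 ^ m) v x = wfun L n c (2 ^ m) x" for m x
    using wfun_eq[OF L, where J = "2 ^ m" and n = n and c = c and x = x] v by simp
  have part1: "\<forall>m. set_integrable lborel (dom2 L) (\<lambda>x. \<bar>v x - Rh L (2 ^ m) v x\<bar> powr p)"
    unfolding weq using wfun_integrable[OF L p] by blast
  define \<delta> where "\<delta> m = (\<Sum>k\<le>n. \<bar>c k\<bar> * (if k = 0 then 0 else errk L (2 ^ m) k))" for m
  have \<delta>lim: "\<delta> \<longlonglongrightarrow> 0"
  proof -
    have "\<delta> \<longlonglongrightarrow> (\<Sum>k\<le>n. \<bar>c k\<bar> * 0)"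
      unfolding \<delta>_def[abs_def]
    proof (intro tendsto_sum tendsto_mult tendsto_const)
      fix k
      show "(\<lambda>m. if k = 0 then 0 else errk L (2 ^ m) k) \<longlonglongrightarrow> 0"
        using errk_lim[OF L, of k] by (cases "k = 0") auto
    qed
    then show ?thesis by simp
  qed
  define M where "M = measure lborel (dom2 L)"
  have M0: "0 \<le> M" by (simp add: M_def)
  have bnd: "Lp_norm L p (\<lambda>x. v x - Rh L (2 ^ m) v x) \<le> M powr (1 / p) * \<delta> m" if m: "m \<ge> 1" for m
  proof -
    have J: "2 \<le> (2::nat) ^ m"
    proof -
      have "(2::nat) ^ 1 \<le> 2 ^ m" by (rule power_increasing) (use m in auto)
      then show ?thesis by simp
    qed
    have wb: "\<And>x. x \<in> dom2 L \<Longrightarrow> \<bar>wfun L n c (2 ^ m) x\<bar> \<le> \<delta> m"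
      unfolding \<delta>_def by (rule wfun_bound[OF L J])
    have "(0, 0) \<in> dom2 L" using L by (simp add: dom2_def)
    then have d0: "0 \<le> \<delta> m" using wb by (meson abs_ge_zero order_trans)
    define I where "I = (LINT x:dom2 L|lborel. \<bar>wfun L n c (2 ^ m) x\<bar> powr p)"
    have I0: "0 \<le> I" unfolding I_def set_lebesgue_integral_def by (rule Bochner_Integration.integral_nonneg) simp
    have "I \<le> (LINT x:dom2 L|lborel. \<delta> m powr p)"
      unfolding I_def
      by (rule set_integral_mono[OF wfun_integrable[OF L p] const_set_integrable])
         (use wb p in \<open>auto intro!: powr_mono2\<close>)
    also have "\<dots> = M * \<delta> m powr p"
      using set_integral_const[OF dom2_sets[of L], of "\<delta> m powr p"] dom2_fin[of L] by (simp add: M_def)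
    finally have "I powr (1 / p) \<le> (M * \<delta> m powr p) powr (1 / p)"
      using I0 p by (intro powr_mono2) auto
    also have "\<dots> = M powr (1 / p) * \<delta> m"
      using p d0 by (simp add: powr_mult powr_powr powr_one)
    finally show ?thesis unfolding Lp_norm_def weq I_def .
  qed
  have part2: "(\<lambda>m. Lp_norm L p (\<lambda>x. v x - Rh L (2 ^ m) v x)) \<longlonglongrightarrow> 0"
  proof (rule tendsto_sandwich[where f = "\<lambda>_. 0" and h = "\<lambda>m. M powr (1 / p) * \<delta> m"])
    show "\<forall>\<^sub>F m in sequentially. 0 \<le> Lp_norm L p (\<lambda>x. v x - Rh L (2 ^ m) v x)"
      by (simp add: Lp_norm_def)
    show "\<forall>\<^sub>F m in sequentially. Lp_norm L p (\<lambda>x. v x - Rh L (2 ^ m) v x) \<le> M powr (1 / p) * \<delta> m"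
      using bnd by (auto simp: eventually_sequentially)
    show "(\<lambda>_. 0) \<longlonglongrightarrow> (0::real)" by simp
    have "(\<lambda>m. M powr (1 / p) * \<delta> m) \<longlonglongrightarrow> M powr (1 / p) * 0"
      by (intro tendsto_intros \<delta>lim)
    then show "(\<lambda>m. M powr (1 / p) * \<delta> m) \<longlonglongrightarrow> 0" by simp
  qed
  show ?thesis using part1 part2 by blast
qed

end
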